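(* Let $X\subset\mathbb{R}^d$ be a finite point cloud in general position. For every $1\le k<d$, $\mathrm{MSA}^k\subseteq \mathrm{USC}^k$.
   Context: General position: no $d+1$ points of $X$ on a common affine hyperplane, no $d+2$ on a common $(d-1)$-sphere; $\mathsf{DEL}=\mathsf{DEL}(X)$ is the Delaunay complex and $\mathsf{DEL}^k$ its set of $k$-simplices; $\delta(\sigma)$ is the Euclidean diameter. Total orders $\prec$ on $\mathsf{DEL}^k$ are defined recursively: for edges, $\sigma\prec\sigma'$ iff $\delta(\sigma)<\delta(\sigma')$, or $\delta(\sigma)=\delta(\sigma')$ and $\sigma$ precedes $\sigma'$ lexicographically (vertices indexed and sorted increasingly); for $(k+1)$-simplices, $\sigma\prec\sigma'$ iff $\max\partial\sigma\prec\max\partial\sigma'$, or $\max\partial\sigma=\max\partial\sigma'$ and $\sigma$ precedes $\sigma'$ lexicographically, where $\partial\sigma$ is the set of facets and $\max$ is taken w.r.t. $\prec$ on $k$-simplices. A set $S\subseteq\mathsf{DEL}^k$ is a $k$-spanning acycle if, with $L=\mathsf{DEL}^{(k-1)}\cup S$ ($(k-1)$-skeleton plus $S$), $\tilde\beta_k(L)=0$ and $\tilde\beta_{k-1}(L)=0$ (reduced Betti numbers). $\mathrm{MSA}^k$ is the minimum $k$-spanning acycle of $\mathsf{DEL}$ w.r.t. $\prec$: the unique $k$-spanning acycle minimizing $\sum_{\sigma\in S}w(\sigma)$ for any weight $w:\mathsf{DEL}^k\to\mathbb{R}$ strictly increasing along $\prec$ (equivalently, the output of Kruskal's greedy algorithm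 processing $k$-simplices in $\prec$ order). $\mathrm{USC}^k=\{\sigma\in\mathsf{DEL}^k : \sigma\prec\max\partial\tau \text{ for every } (k+1)\text{-simplex } \tau\in\mathsf{DEL} \text{ with } \sigma\subset\tau\}$ (the $k$-dimensional Urquhart simplices). *)

theory Defs
  imports "HOL-Analysis.Analysis"
begin

definition DEL :: "'a::euclidean_space set \<Rightarrow> 'a set set" where
  "DEL X = {\<sigma>. \<sigma> \<noteq> {} \<and> \<sigma> \<subseteq> X \<and>
              (\<exists>y. \<forall>x\<in>\<sigma>. \<forall>z\<in>X. dist y x \<le> dist y z)}"

definition simplices_of_dim :: "'a set set \<Rightarrow> nat \<Rightarrow> 'a set set" where
  "simplices_of_dim K k = {\<sigma>\<in>K. card \<sigma> = Suc k}"

definition skeleton :: "'a set set \<Rightarrow> nat \<Rightarrow> 'a set set" where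
  "skeleton K j = {\<sigma>\<in>K. card \<sigma> \<le> Suc j}"

definition general_position :: "'a::euclidean_space set \<Rightarrow> bool" where
  "general_position X \<longleftrightarrow>
     (\<forall>Y\<subseteq>X. card Y = DIM('a) + 1 \<longrightarrow>
         \<not> (\<exists>a b. a \<noteq> 0 \<and> Y \<subseteq> {x. a \<bullet> x = b})) \<and>
     (\<forall>Y\<subseteq>X. card Y = DIM('a) + 2 \<longrightarrow>
         \<not> (\<exists>c r. r > 0 \<and> Y \<subseteq> sphere c r))"

definition facets :: "'a set \<Rightarrow> 'a set set" where
  "facets \<sigma> = {\<sigma> - {v} | v. v \<in> \<sigma>}"

definition lexless :: "('a \<Rightarrow> nat) \<Rightarrow> 'a set \<Rightarrow> 'a set \<Rightarrow> bool" where
  "lexless \<iota> s t \<longleftrightarrow>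
     (sorted_list_of_set (\<iota> ` s), sorted_list_of_set (\<iota> ` t)) \<in> lexord {(a, b). a < b}"

definition maxf :: "('a set \<Rightarrow> 'a set \<Rightarrow> bool) \<Rightarrow> 'a set \<Rightarrow> 'a set" where
  "maxf R \<sigma> = (THE f. f \<in> facets \<sigma> \<and> (\<forall>g\<in>facets \<sigma>. g \<noteq> f \<longrightarrow> R g f))"

text \<open>prec \<iota> k: the order on k-simplices (k \<ge> 1); level 0 is irrelevant.\<close>
primrec prec :: "('a::euclidean_space \<Rightarrow> nat) \<Rightarrow> nat \<Rightarrow> 'a set \<Rightarrow> 'a set \<Rightarrow> bool" where
  "prec \<iota> 0 = lexless \<iota>"
| "prec \<iota> (Suc k) =
     (if k = 0 then
        (\<lambda>s t. diameter s < diameter t \<or> (diameter s = diameter t \<and> lexless \<iota> s t))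
      else
        (let R = prec \<iota> k in
          (\<lambda>s t. R (maxf R s) (maxf R t) \<or> (maxf R s = maxf R t \<and> lexless \<iota> s t))))"

section \<open>Reduced Z/2 homology of a simplicial complex (chains = finite sets of simplices)\<close>

definition boundary :: "'a set set \<Rightarrow> 'a set set" where
  "boundary C = {f. odd (card {s\<in>C. f \<in> facets s})}"

definition reduced_cycle :: "'a set set \<Rightarrow> nat \<Rightarrow> 'a set set \<Rightarrow> bool" where
  "reduced_cycle K j C \<longleftrightarrow> finite C \<and> C \<subseteq> simplices_of_dim K j \<and>
     (if j = 0 then even (card C) else boundary C = {})"

definition reduced_betti_zero :: "'a set set \<Rightarrow> nat \<Rightarrow> bool" where
  "reduced_betti_zero K j \<longleftrightarrow>
     (\<forall>C. reduced_cycle K j C \<longrightarrow>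
        (\<exists>D. finite D \<and> D \<subseteq> simplices_of_dim K (Suc j) \<and> boundary D = C))"

definition spanning_acycle :: "'a::euclidean_space set \<Rightarrow> nat \<Rightarrow> 'a set set \<Rightarrow> bool" where
  "spanning_acycle X k S \<longleftrightarrow> S \<subseteq> simplices_of_dim (DEL X) k \<and>
     (let L = skeleton (DEL X) (k - 1) \<union> S in
        reduced_betti_zero L k \<and> reduced_betti_zero L (k - 1))"

definition is_MSA :: "('a::euclidean_space \<Rightarrow> nat) \<Rightarrow> 'a set \<Rightarrow> nat \<Rightarrow> 'a set set \<Rightarrow> bool" where
  "is_MSA \<iota> X k S \<longleftrightarrow> spanning_acycle X k S \<and>
     (\<forall>w :: 'a set \<Rightarrow> real.
        (\<forall>s\<in>simplices_of_dim (DEL X) k. \<forall>t\<in>simplices_of_dim (DEL X) k.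
            prec \<iota> k s t \<longrightarrow> w s < w t) \<longrightarrow>
        (\<forall>S'. spanning_acycle X k S' \<longrightarrow> sum w S \<le> sum w S'))"

definition MSA :: "('a::euclidean_space \<Rightarrow> nat) \<Rightarrow> 'a set \<Rightarrow> nat \<Rightarrow> 'a set set" where
  "MSA \<iota> X k = (THE S. is_MSA \<iota> X k S)"

definition USC :: "('a::euclidean_space \<Rightarrow> nat) \<Rightarrow> 'a set \<Rightarrow> nat \<Rightarrow> 'a set set" where
  "USC \<iota> X k = {\<sigma>\<in>simplices_of_dim (DEL X) k.
     \<forall>\<tau>\<in>simplices_of_dim (DEL X) (Suc k). \<sigma> \<subset> \<tau> \<longrightarrow> prec \<iota> k \<sigma> (maxf (prec \<iota> k) \<tau>)}"

end

theory Submission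
  imports Defs
begin

definition symd :: "'x set \<Rightarrow> 'x set \<Rightarrow> 'x set" where
  "symd A B = (A - B) \<union> (B - A)"

lemma symd_iff [simp]: "x \<in> symd A B \<longleftrightarrow> (x \<in> A) \<noteq> (x \<in> B)"
  unfolding symd_def by auto

lemma finite_symd [simp]: "finite A \<Longrightarrow> finite B \<Longrightarrow> finite (symd A B)"
  unfolding symd_def by auto

lemma symd_empty [simp]: "symd A {} = A" "symd {} A = A" "symd A A = {}"
  by auto

lemma card_symd:
  assumes "finite A" "finite B"
  shows "card (symd A B) + 2 * card (A \<inter> B) = card A + card B"
proof -
  have "symd A B = (A - B) \<union> (B - A)" by (simp add: symd_def)
  moreover have "card ((A - B) \<union> (B - A)) = card (A - B) + card (B - A)"
    by (rule card_Un_disjoint) (use assms in auto)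
  moreover have "card (A - B) = card A - card (A \<inter> B)"
    using assms by (simp add: card_Diff_subset_Int)
  moreover have "card (B - A) = card B - card (A \<inter> B)"
    using assms by (simp add: card_Diff_subset_Int Int_commute)
  moreover have "card (A \<inter> B) \<le> card A" "card (A \<inter> B) \<le> card B"
    using assms by (auto intro: card_mono)
  ultimately show ?thesis by simp
qed

lemma boundary_symd:
  assumes "finite A" "finite B"
  shows "boundary (symd A B) = symd (boundary A) (boundary B)"
proof (rule set_eqI)
  fix f
  let ?PA = "{s\<in>A. f \<in> facets s}" and ?PB = "{s\<in>B. f \<in> facets s}"
  have e: "{s\<in>symd A B. f \<in> facets s} = symd ?PA ?PB" by auto
  have "card (symd ?PA ?PB) + 2 * card (?PA \<inter> ?PB) = card ?PA + card ?PB"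
    by (rule card_symd) (use assms in auto)
  then have "odd (card (symd ?PA ?PB)) \<longleftrightarrow> odd (card ?PA) \<noteq> odd (card ?PB)"
    by presburger
  then show "f \<in> boundary (symd A B) \<longleftrightarrow> f \<in> symd (boundary A) (boundary B)"
    unfolding boundary_def using e by simp
qed

lemma boundary_empty [simp]: "boundary {} = {}"
  by (simp add: boundary_def)

lemma boundary_single [simp]: "boundary {s} = facets s"
proof -
  have "\<And>f. {s'\<in>{s}. f \<in> facets s'} = (if f \<in> facets s then {s} else {})" by auto
  then show ?thesis unfolding boundary_def by auto
qed

lemma symd_4: "symd (symd A B) (symd C D) = symd (symd A C) (symd B D)"
  by auto

lemma insert_symd: "s \<notin> C \<Longrightarrow> insert s C = symd {s} C"
  by auto

lemma boundary_insert:
  assumes "finite C" "s \<notin> C"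
  shows "boundary (insert s C) = symd (facets s) (boundary C)"
proof -
  have "boundary (symd {s} C) = symd (boundary {s}) (boundary C)"
    using assms(1) by (intro boundary_symd) simp_all
  then show ?thesis unfolding insert_symd[OF assms(2), symmetric] boundary_single .
qed

lemma facets_iff: "f \<in> facets s \<longleftrightarrow> (\<exists>v\<in>s. f = s - {v})"
  unfolding facets_def by auto

lemma finite_facets [simp]: "finite s \<Longrightarrow> finite (facets s)"
proof -
  have "facets s = (\<lambda>v. s - {v}) ` s" unfolding facets_def by auto
  then show "finite s \<Longrightarrow> finite (facets s)" by simp
qed

lemma boundary_sub: "f \<in> boundary C \<Longrightarrow> \<exists>s\<in>C. f \<in> facets s"
  unfolding boundary_def by (cases "{s \<in> C. f \<in> facets s} = {}") auto

lemma facet_sub: "f \<in> facets s \<Longrightarrow> f \<subseteq> s"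
  unfolding facets_def by auto

lemma finite_boundary [simp]:
  assumes "finite C" "\<forall>s\<in>C. finite s"
  shows "finite (boundary C)"
proof -
  have "boundary C \<subseteq> \<Union> (facets ` C)" using boundary_sub by blast
  moreover have "finite (\<Union> (facets ` C))" using assms by auto
  ultimately show ?thesis by (rule finite_subset)
qed

lemma boundary_facets [simp]:
  assumes "finite s"
  shows "boundary (facets s) = {}"
proof -
  have "even (card {t \<in> facets s. f \<in> facets t})" for f
  proof (cases "\<exists>a b. a \<in> s \<and> b \<in> s \<and> a \<noteq> b \<and> f = s - {a, b}")
    case True
    then obtain a b where ab: "a \<in> s" "b \<in> s" "a \<noteq> b" "f = s - {a, b}" by blast
    have "{t \<in> facets s. f \<in> facets t} = {s - {a}, s - {b}}"
    proof (rule set_eqI, rule iffI)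
      fix t assume "t \<in> {t \<in> facets s. f \<in> facets t}"
      then obtain c e where c: "c \<in> s" "t = s - {c}" "e \<in> t" "f = t - {e}"
        unfolding facets_iff by blast
      then have "s - {a, b} = s - {c, e}" using ab by auto
      then have "c = a \<or> c = b" using c ab by blast
      then show "t \<in> {s - {a}, s - {b}}" using c by auto
    next
      fix t assume "t \<in> {s - {a}, s - {b}}"
      then show "t \<in> {t \<in> facets s. f \<in> facets t}"
      proof
        assume t: "t = s - {a}"
        have "f = t - {b}" "b \<in> t" using ab t by auto
        then show ?thesis using t ab unfolding facets_iff by blast
      next
        assume "t \<in> {s - {b}}"
        then have t: "t = s - {b}" by simp
        have "f = t - {a}" "a \<in> t" using ab t by auto
        then show ?thesis using t ab unfolding facets_iff by blast
      qed
    qed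
    moreover have "s - {a} \<noteq> s - {b}" using ab by blast
    ultimately show ?thesis by simp
  next
    case False
    have "{t \<in> facets s. f \<in> facets t} = {}"
    proof (rule ccontr)
      assume "{t \<in> facets s. f \<in> facets t} \<noteq> {}"
      then obtain t c e where "c \<in> s" "t = s - {c}" "e \<in> t" "f = t - {e}"
        unfolding facets_iff by blast
      then have "c \<in> s \<and> e \<in> s \<and> c \<noteq> e \<and> f = s - {c, e}" by auto
      then show False using False by blast
    qed
    then show ?thesis by (metis card.empty even_zero)
  qed
  then show ?thesis unfolding boundary_def by auto
qed

lemma boundary_boundary:
  assumes "finite C" "\<forall>s\<in>C. finite s"
  shows "boundary (boundary C) = {}"
  using assms
proof (induction C rule: finite_induct)
  case empty then show ?case by simp
next
  case (insert s C)
  have fs: "finite s" "\<forall>s\<in>C. finite s" using insert(4) by simp_all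
  have fb: "finite (boundary C)" using insert(1) fs(2) by (rule finite_boundary)
  have IH: "boundary (boundary C) = {}" using insert(3) fs(2) by blast
  have "boundary (boundary (insert s C)) = boundary (symd (facets s) (boundary C))"
    unfolding boundary_insert[OF insert(1,2)] ..
  also have "\<dots> = symd (boundary (facets s)) (boundary (boundary C))"
    using fs(1) fb by (intro boundary_symd) simp_all
  also have "\<dots> = {}" unfolding IH boundary_facets[OF fs(1)] by simp
  finally show ?case .
qed

lemma boundary_vertices:
  assumes "finite C" "\<forall>s\<in>C. card s = 1"
  shows "boundary C = (if even (card C) then {} else {{}})"
proof -
  have fs: "facets s = {{}}" if "s \<in> C" for s
  proof -
    have "card s = 1" using assms(2) that by blast
    then obtain x where "s = {x}" by (rule card_1_singletonE)
    then show ?thesis unfolding facets_def by auto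
  qed
  have "{s \<in> C. f \<in> facets s} = (if f = {} then C else {})" for f
    using fs by auto
  then show ?thesis unfolding boundary_def by auto
qed

lemma reduced_cycle_iff:
  "reduced_cycle K j C \<longleftrightarrow> finite C \<and> C \<subseteq> simplices_of_dim K j \<and> boundary C = {}"
proof (cases j)
  case 0
  show ?thesis
  proof (cases "finite C \<and> C \<subseteq> simplices_of_dim K j")
    case True
    then have "\<forall>s\<in>C. card s = 1" using 0 unfolding simplices_of_dim_def by auto
    then show ?thesis using True 0 boundary_vertices[of C] unfolding reduced_cycle_def by auto
  next
    case False then show ?thesis unfolding reduced_cycle_def by auto
  qed
next
  case (Suc n) then show ?thesis unfolding reduced_cycle_def by auto
qed

lemma rbz_iff:
  "reduced_betti_zero K j \<longleftrightarrow>
    (\<forall>C. finite C \<and> C \<subseteq> simplices_of_dim K j \<and> boundary C = {} \<longrightarrow>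
        (\<exists>D. finite D \<and> D \<subseteq> simplices_of_dim K (Suc j) \<and> boundary D = C))"
  by (simp only: reduced_betti_zero_def reduced_cycle_iff)

definition cone :: "'x \<Rightarrow> 'x set set \<Rightarrow> 'x set set" where
  "cone a C = insert a ` C"

lemma facets_insert:
  assumes "a \<notin> s"
  shows "facets (insert a s) = insert s (cone a (facets s))"
proof (rule set_eqI, rule iffI)
  fix f assume "f \<in> facets (insert a s)"
  then obtain v where v: "v \<in> insert a s" "f = insert a s - {v}" unfolding facets_iff by blast
  show "f \<in> insert s (cone a (facets s))"
  proof (cases "v = a")
    case True then show ?thesis using v assms by auto
  next
    case False
    then have fe: "f = insert a (s - {v})" and "v \<in> s" using v by auto
    then have "s - {v} \<in> facets s" unfolding facets_iff by blast
    then have "f \<in> insert a ` facets s" unfolding fe by (rule imageI)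
    then show ?thesis unfolding cone_def by simp
  qed
next
  fix f assume "f \<in> insert s (cone a (facets s))"
  then show "f \<in> facets (insert a s)"
  proof
    assume "f = s"
    then have "f = insert a s - {a}" using assms by simp
    then show ?thesis unfolding facets_iff by blast
  next
    assume "f \<in> cone a (facets s)"
    then obtain g where "g \<in> facets s" "f = insert a g" unfolding cone_def by blast
    then obtain v where v: "v \<in> s" "f = insert a (s - {v})" unfolding facets_iff by blast
    then have "f = insert a s - {v}" "v \<in> insert a s" using assms by auto
    then show ?thesis unfolding facets_iff by blast
  qed
qed

lemma cone_symd:
  assumes "\<forall>s\<in>A. a \<notin> s" "\<forall>s\<in>B. a \<notin> s"
  shows "cone a (symd A B) = symd (cone a A) (cone a B)"
proof -
  have inj: "inj_on (insert a) {s. a \<notin> s}"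
    by (rule inj_onI) (metis Diff_insert_absorb mem_Collect_eq)
  have AB: "A \<subseteq> {s. a \<notin> s}" "B \<subseteq> {s. a \<notin> s}" using assms by auto
  have "cone a (symd A B) = insert a ` (A - B) \<union> insert a ` (B - A)"
    unfolding cone_def symd_def by (simp add: image_Un)
  also have "\<dots> = (insert a ` A - insert a ` B) \<union> (insert a ` B - insert a ` A)"
  proof -
    have d: "A - B \<subseteq> {s. a \<notin> s}" "B - A \<subseteq> {s. a \<notin> s}" using AB by auto
    show ?thesis
      using inj_on_image_set_diff[OF inj d(1) AB(2)] inj_on_image_set_diff[OF inj d(2) AB(1)] by simp
  qed
  finally show ?thesis unfolding cone_def symd_def .
qed

lemma finite_cone [simp]: "finite C \<Longrightarrow> finite (cone a C)"
  unfolding cone_def by simp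

lemma boundary_cone:
  assumes "finite C" "\<forall>s\<in>C. finite s \<and> a \<notin> s"
  shows "boundary (cone a C) = symd C (cone a (boundary C))"
  using assms
proof (induction C rule: finite_induct)
  case empty then show ?case by (simp add: cone_def)
next
  case (insert s C)
  have as: "a \<notin> s" "finite s" using insert(4) by simp_all
  have nin: "insert a s \<notin> cone a C"
  proof
    assume "insert a s \<in> cone a C"
    then obtain t where "t \<in> C" "insert a s = insert a t" unfolding cone_def by auto
    moreover have "a \<notin> t" using insert(4) \<open>t \<in> C\<close> by simp
    ultimately have "s = t" using as by (metis Diff_insert_absorb)
    then show False using insert(2) \<open>t \<in> C\<close> by simp
  qed
  have c: "cone a (insert s C) = insert (insert a s) (cone a C)" unfolding cone_def by auto
  have fC: "finite (boundary C)" using insert(1,4) by simp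
  have bfree: "\<forall>f\<in>boundary C. a \<notin> f"
  proof
    fix f assume "f \<in> boundary C"
    then obtain t where "t \<in> C" "f \<in> facets t" using boundary_sub by blast
    moreover have "a \<notin> t" using insert(4) \<open>t \<in> C\<close> by simp
    ultimately show "a \<notin> f" using facet_sub by blast
  qed
  have ffree: "\<forall>f\<in>facets s. a \<notin> f" using as(1) facet_sub by blast
  have IH: "boundary (cone a C) = symd C (cone a (boundary C))" using insert(3,4) by simp
  have fcC: "finite (cone a C)" using insert(1) by simp
  have "boundary (cone a (insert s C)) = symd (facets (insert a s)) (boundary (cone a C))"
    unfolding c by (rule boundary_insert[OF fcC nin])
  also have "\<dots> = symd (insert s (cone a (facets s))) (symd C (cone a (boundary C)))"
    unfolding IH facets_insert[OF as(1)] ..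
  also have "\<dots> = symd (insert s C) (symd (cone a (facets s)) (cone a (boundary C)))"
  proof -
    have n1: "s \<notin> cone a (facets s)" "s \<notin> C"
      using as insert(2) unfolding cone_def by auto
    show ?thesis
      unfolding insert_symd[OF n1(1)] insert_symd[OF n1(2)] symd_4 ..
  qed
  also have "\<dots> = symd (insert s C) (cone a (symd (facets s) (boundary C)))"
    using cone_symd[OF ffree bfree] by simp
  also have "\<dots> = symd (insert s C) (cone a (boundary (insert s C)))"
    unfolding boundary_insert[OF insert(1,2)] ..
  finally show ?case .
qed

section \<open>The full simplex is acyclic\<close>

definition fsimp :: "'x set \<Rightarrow> 'x set set" where
  "fsimp R = {s. s \<noteq> {} \<and> s \<subseteq> R}"

lemma simplex_acyclic:
  assumes R: "finite R" "a \<in> R" and C: "finite C" "C \<subseteq> simplices_of_dim (fsimp R) j" "boundary C = {}"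
  shows "\<exists>D. finite D \<and> D \<subseteq> simplices_of_dim (fsimp R) (Suc j) \<and> boundary D = C"
proof -
  define C0 where "C0 = {s\<in>C. a \<notin> s}"
  define C1 where "C1 = {s\<in>C. a \<in> s}"
  define C1' where "C1' = (\<lambda>s. s - {a}) ` C1"
  have finC: "\<forall>s\<in>C. finite s" using C(2) R(1) unfolding simplices_of_dim_def fsimp_def
    by (auto intro: finite_subset)
  have fC0: "finite C0" "finite C1" "finite C1'" using C(1) unfolding C0_def C1_def C1'_def by auto
  have C1c: "C1 = cone a C1'"
  proof -
    have "cone a C1' = (\<lambda>s. insert a (s - {a})) ` C1" unfolding cone_def C1'_def by (simp add: image_image)
    also have "\<dots> = C1" unfolding C1_def by (rule image_cong_simp[THEN trans, of _ _ _ id]) (auto simp: insert_absorb)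
    finally show ?thesis by simp
  qed
  have Csplit: "C = symd C0 C1" unfolding C0_def C1_def by auto
  have free1: "\<forall>s\<in>C1'. finite s \<and> a \<notin> s" using finC unfolding C1'_def C1_def by auto
  have free0: "\<forall>s\<in>C0. finite s \<and> a \<notin> s" using finC unfolding C0_def by auto
  have bC0free: "\<forall>f\<in>boundary C0. a \<notin> f"
  proof
    fix f assume "f \<in> boundary C0"
    then obtain t where "t \<in> C0" "f \<in> facets t" using boundary_sub by blast
    then show "a \<notin> f" using free0 facet_sub by blast
  qed
  have conein: "\<forall>g\<in>cone a X. a \<in> g" for X unfolding cone_def by auto
  have "boundary C = symd (boundary C0) (boundary (cone a C1'))"
    using Csplit C1c fC0 boundary_symd by metis
  also have "\<dots> = symd (boundary C0) (symd C1' (cone a (boundary C1')))"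
    using boundary_cone[OF fC0(3) free1] by simp
  finally have bC: "symd (boundary C0) (symd C1' (cone a (boundary C1'))) = {}" using C(3) by simp
  have eq: "boundary C0 = C1'"
  proof (rule set_eqI)
    fix f
    show "f \<in> boundary C0 \<longleftrightarrow> f \<in> C1'"
    proof (cases "a \<in> f")
      case True then show ?thesis using bC0free free1 by blast
    next
      case False
      then have "f \<notin> cone a (boundary C1')" using conein by blast
      moreover have "f \<notin> symd (boundary C0) (symd C1' (cone a (boundary C1')))" using bC by simp
      ultimately show ?thesis by simp
    qed
  qed
  define D where "D = cone a C0"
  have "boundary D = symd C0 (cone a (boundary C0))"
    unfolding D_def by (rule boundary_cone[OF fC0(1) free0])
  also have "\<dots> = C" unfolding eq C1c[symmetric] Csplit[symmetric] ..
  finally have bD: "boundary D = C" .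
  have "D \<subseteq> simplices_of_dim (fsimp R) (Suc j)"
  proof
    fix t assume "t \<in> D"
    then obtain s where s: "s \<in> C0" "t = insert a s" unfolding D_def cone_def by auto
    have sC: "s \<in> C" and as: "a \<notin> s" using s(1) unfolding C0_def by simp_all
    have fs: "finite s" using free0 s(1) by blast
    have "s \<in> simplices_of_dim (fsimp R) j" using sC C(2) by blast
    then have cs: "card s = Suc j" and sR: "s \<subseteq> R" unfolding simplices_of_dim_def fsimp_def by simp_all
    have "card t = Suc (Suc j)" using s(2) as fs cs by simp
    moreover have "t \<noteq> {}" "t \<subseteq> R" using s(2) sR R(2) by auto
    ultimately show "t \<in> simplices_of_dim (fsimp R) (Suc j)"
      unfolding simplices_of_dim_def fsimp_def by simp
  qed
  moreover have "finite D" unfolding D_def using fC0 by simp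
  ultimately show ?thesis using bD by blast
qed

lemma simplex_rbz:
  assumes "finite R" "R \<noteq> {}"
  shows "reduced_betti_zero (fsimp R) j"
  unfolding rbz_iff using simplex_acyclic[OF assms(1)] assms(2) by blast

section \<open>Complexes of maximizer sets\<close>

definition Ucx :: "('b \<Rightarrow> 'c::euclidean_space) \<Rightarrow> 'b set \<Rightarrow> 'c \<Rightarrow> 'b set set" where
  "Ucx e P v = {\<sigma>. \<sigma> \<noteq> {} \<and> \<sigma> \<subseteq> P \<and> (\<exists>u. 0 < inner u v \<and> (\<forall>x\<in>\<sigma>. \<forall>w\<in>P. inner u (e w) \<le> inner u (e x)))}"

definition Cs :: "('b \<Rightarrow> 'c::euclidean_space) \<Rightarrow> 'b set \<Rightarrow> 'c \<Rightarrow> 'b set \<Rightarrow> 'c set" where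
  "Cs e P v \<sigma> = {u. inner u v = 1 \<and> (\<forall>x\<in>\<sigma>. \<forall>w\<in>P. inner u (e w) \<le> inner u (e x))}"

definition qp :: "'c::euclidean_space \<Rightarrow> 'c" where
  "qp v = v /\<^sub>R inner v v"

definition zz :: "('b \<Rightarrow> 'c::euclidean_space) \<Rightarrow> 'b set \<Rightarrow> 'c \<Rightarrow> 'b set \<Rightarrow> 'c" where
  "zz e P v \<sigma> = closest_point (Cs e P v \<sigma>) (qp v)"

definition ff :: "('b \<Rightarrow> 'c::euclidean_space) \<Rightarrow> 'b set \<Rightarrow> 'c \<Rightarrow> 'b set \<Rightarrow> real" where
  "ff e P v \<sigma> = dist (qp v) (zz e P v \<sigma>)"

definition rho :: "('b \<Rightarrow> 'c::euclidean_space) \<Rightarrow> 'b set \<Rightarrow> 'c \<Rightarrow> 'b set" where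
  "rho e P z = {w\<in>P. \<forall>w'\<in>P. inner z (e w') \<le> inner z (e w)}"

definition vp :: "'c::euclidean_space \<Rightarrow> 'c \<Rightarrow> 'c" where
  "vp v z = (qp v - z) - inner z (qp v - z) *\<^sub>R v"

lemma Ucx_sub: "\<sigma> \<in> Ucx e P v \<Longrightarrow> \<tau> \<noteq> {} \<Longrightarrow> \<tau> \<subseteq> \<sigma> \<Longrightarrow> \<tau> \<in> Ucx e P v"
  unfolding Ucx_def by blast

lemma Ucx_finite: "finite P \<Longrightarrow> finite (Ucx e P v)"
  by (rule finite_subset[of _ "Pow P"]) (auto simp: Ucx_def)

lemma Ucx_elem_finite: "finite P \<Longrightarrow> \<sigma> \<in> Ucx e P v \<Longrightarrow> finite \<sigma>"
  unfolding Ucx_def by (auto intro: finite_subset)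

lemma Ucx_zero: "Ucx e P 0 = {}"
  unfolding Ucx_def by auto

lemma qp_v: "v \<noteq> 0 \<Longrightarrow> inner (qp v) v = 1"
  unfolding qp_def by simp

lemma inner_diff_le0: "inner (a - b) u \<le> 0 \<longleftrightarrow> inner u a \<le> inner (u::'c::real_inner) b"
  by (metis inner_commute inner_diff_left diff_le_0_iff_le)

lemma Cs_closed: "closed (Cs e P v \<sigma>)"
proof -
  have "Cs e P v \<sigma> = {u. inner v u = 1} \<inter> (\<Inter>x\<in>\<sigma>. \<Inter>w\<in>P. {u. inner (e w - e x) u \<le> 0})"
    unfolding Cs_def inner_diff_le0 by (auto simp: inner_commute)
  then show ?thesis by (auto intro!: closed_Int closed_INT closed_hyperplane closed_halfspace_le)
qed

lemma Cs_convex: "convex (Cs e P v \<sigma>)"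
proof -
  have "Cs e P v \<sigma> = {u. inner v u = 1} \<inter> (\<Inter>x\<in>\<sigma>. \<Inter>w\<in>P. {u. inner (e w - e x) u \<le> 0})"
    unfolding Cs_def inner_diff_le0 by (auto simp: inner_commute)
  then show ?thesis by (auto intro!: convex_Int convex_INT convex_hyperplane convex_halfspace_le)
qed

lemma Cs_ne: "\<sigma> \<in> Ucx e P v \<Longrightarrow> Cs e P v \<sigma> \<noteq> {}"
proof -
  assume "\<sigma> \<in> Ucx e P v"
  then obtain u where u: "0 < inner u v" "\<forall>x\<in>\<sigma>. \<forall>w\<in>P. inner u (e w) \<le> inner u (e x)"
    unfolding Ucx_def by blast
  define u' where "u' = (1 / inner u v) *\<^sub>R u"
  have "inner u' v = 1" unfolding u'_def using u(1) by simp
  moreover have "\<forall>x\<in>\<sigma>. \<forall>w\<in>P. inner u' (e w) \<le> inner u' (e x)"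
    unfolding u'_def using u by (auto intro: divide_right_mono)
  ultimately have "u' \<in> Cs e P v \<sigma>" unfolding Cs_def by blast
  then show ?thesis by blast
qed

lemma Cs_mono: "\<tau> \<subseteq> \<sigma> \<Longrightarrow> Cs e P v \<sigma> \<subseteq> Cs e P v \<tau>"
  unfolding Cs_def by blast

lemma zz_in: "\<sigma> \<in> Ucx e P v \<Longrightarrow> zz e P v \<sigma> \<in> Cs e P v \<sigma>"
  unfolding zz_def by (rule closest_point_in_set[OF Cs_closed Cs_ne])

lemma zz_le: "y \<in> Cs e P v \<sigma> \<Longrightarrow> ff e P v \<sigma> \<le> dist (qp v) y"
  unfolding ff_def zz_def by (rule closest_point_le[OF Cs_closed])

lemma zz_unique:
  assumes "y \<in> Cs e P v \<sigma>" "dist (qp v) y \<le> ff e P v \<sigma>"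
  shows "zz e P v \<sigma> = y"
proof -
  have "\<forall>z\<in>Cs e P v \<sigma>. dist (qp v) y \<le> dist (qp v) z"
    using assms zz_le by (meson order_trans)
  then show ?thesis unfolding zz_def
    using closest_point_unique[OF Cs_convex Cs_closed assms(1)] by metis
qed

lemma ff_mono:
  assumes "\<sigma> \<in> Ucx e P v" "\<tau> \<subseteq> \<sigma>"
  shows "ff e P v \<tau> \<le> ff e P v \<sigma>" "ff e P v \<tau> = ff e P v \<sigma> \<Longrightarrow> zz e P v \<tau> = zz e P v \<sigma>"
proof -
  have z: "zz e P v \<sigma> \<in> Cs e P v \<tau>" using zz_in[OF assms(1)] Cs_mono[OF assms(2)] by blast
  then show "ff e P v \<tau> \<le> ff e P v \<sigma>" using zz_le unfolding ff_def by blast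
  assume "ff e P v \<tau> = ff e P v \<sigma>"
  then show "zz e P v \<tau> = zz e P v \<sigma>" using zz_unique[OF z] unfolding ff_def by simp
qed

lemma in_rho: "\<sigma> \<in> Ucx e P v \<Longrightarrow> \<sigma> \<subseteq> rho e P (zz e P v \<sigma>)"
  using zz_in[of \<sigma> e P v] unfolding Cs_def rho_def Ucx_def by blast

lemma rho_sub: "rho e P z \<subseteq> P"
  unfolding rho_def by blast

lemma rho_ne_P:
  assumes "\<sigma> \<in> Ucx e P v" "P \<notin> Ucx e P v"
  shows "rho e P (zz e P v \<sigma>) \<noteq> P"
proof
  assume eq: "rho e P (zz e P v \<sigma>) = P"
  have "inner (zz e P v \<sigma>) v = 1" using zz_in[OF assms(1)] unfolding Cs_def by blast
  moreover have "P \<noteq> {}" using assms(1) unfolding Ucx_def by blast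
  moreover have "\<forall>x\<in>P. \<forall>w\<in>P. inner (zz e P v \<sigma>) (e w) \<le> inner (zz e P v \<sigma>) (e x)"
    using eq unfolding rho_def by blast
  ultimately have "P \<in> Ucx e P v" unfolding Ucx_def by (intro CollectI conjI exI[of _ "zz e P v \<sigma>"]) auto
  then show False using assms(2) by blast
qed

lemma rho_Ucx:
  assumes "inner z v = 1" "\<tau> \<noteq> {}" "\<tau> \<subseteq> rho e P z"
  shows "\<tau> \<in> Ucx e P v" "z \<in> Cs e P v \<tau>"
proof -
  have "\<forall>x\<in>\<tau>. \<forall>w\<in>P. inner z (e w) \<le> inner z (e x)" using assms(3) unfolding rho_def by blast
  then show "\<tau> \<in> Ucx e P v" "z \<in> Cs e P v \<tau>"
    using assms rho_sub[of e P z] unfolding Ucx_def Cs_def by (auto intro!: exI[of _ z])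
qed

lemma rho_eq:
  assumes "x \<in> rho e P z" "w \<in> rho e P z"
  shows "inner z (e w) = inner z (e x)"
proof -
  have "inner z (e w) \<le> inner z (e x)" "inner z (e x) \<le> inner z (e w)"
    using assms unfolding rho_def by blast+
  then show ?thesis by (rule order_antisym)
qed

lemma F3a:
  assumes v: "v \<noteq> 0" and z: "inner z v = 1" and \<tau>: "\<tau> \<noteq> {}" "\<tau> \<subseteq> rho e P z"
    and nA: "\<tau> \<notin> Ucx e (rho e P z) (vp v z)"
  shows "zz e P v \<tau> = z"
proof -
  let ?q = "qp v"
  have zC: "z \<in> Cs e P v \<tau>" using rho_Ucx[OF z \<tau>] by blast
  have "dist ?q z \<le> dist ?q y" if y: "y \<in> Cs e P v \<tau>" for y
  proof -
    define u where "u = y - z"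
    have uv: "inner u v = 0" using y z unfolding u_def Cs_def by (simp add: inner_diff_left)
    have "\<forall>x\<in>\<tau>. \<forall>w\<in>rho e P z. inner u (e w) \<le> inner u (e x)"
    proof (intro ballI)
      fix x w assume x: "x \<in> \<tau>" and w: "w \<in> rho e P z"
      have "inner y (e w) \<le> inner y (e x)" using y x w rho_sub[of e P z] unfolding Cs_def by blast
      moreover have "inner z (e w) = inner z (e x)" using rho_eq[OF _ w] x \<tau>(2) by blast
      ultimately show "inner u (e w) \<le> inner u (e x)" unfolding u_def by (simp add: inner_diff_left)
    qed
    then have "\<not> 0 < inner u (vp v z)" using nA \<tau> unfolding Ucx_def by blast
    moreover have "inner u (vp v z) = inner u (?q - z)"
      unfolding vp_def using uv by (simp add: inner_diff_right)
    ultimately have le: "inner u (?q - z) \<le> 0" by simp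
    have "(dist ?q y)\<^sup>2 = (norm ((?q - z) - u))\<^sup>2" unfolding u_def dist_norm by (simp add: algebra_simps)
    also have "\<dots> = (norm (?q - z))\<^sup>2 - 2 * inner u (?q - z) + (norm u)\<^sup>2"
      by (simp add: power2_norm_eq_inner inner_diff_left inner_diff_right inner_commute)
    also have "\<dots> \<ge> (norm (?q - z))\<^sup>2" using le zero_le_power2[of "norm u"] by linarith
    finally have "(norm (?q - z))\<^sup>2 \<le> (dist ?q y)\<^sup>2" .
    then have "(dist ?q z)\<^sup>2 \<le> (dist ?q y)\<^sup>2" by (simp only: dist_norm)
    then show ?thesis by (rule power2_le_imp_le) simp
  qed
  then have "dist ?q z \<le> ff e P v \<tau>" unfolding ff_def
    using zz_in[OF rho_Ucx(1)[OF z \<tau>]] by blast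
  then show ?thesis using zz_unique[OF zC] by blast
qed

lemma F3c:
  assumes z: "inner z v = 1" and \<tau>: "\<tau> \<noteq> {}" "\<tau> \<subseteq> rho e P z"
    and f: "ff e P v \<tau> = dist (qp v) z"
  shows "zz e P v \<tau> = z"
  using zz_unique[OF rho_Ucx(2)[OF z \<tau>]] f by simp

lemma F3b:
  assumes P: "finite P" and z: "inner z v = 1" and \<tau>: "\<tau> \<noteq> {}" "\<tau> \<subseteq> rho e P z"
    and zz: "zz e P v \<tau> = z"
  shows "\<tau> \<notin> Ucx e (rho e P z) (vp v z)"
proof
  assume "\<tau> \<in> Ucx e (rho e P z) (vp v z)"
  then obtain u where u: "0 < inner u (vp v z)" "\<forall>x\<in>\<tau>. \<forall>w\<in>rho e P z. inner u (e w) \<le> inner u (e x)"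
    unfolding Ucx_def by blast
  let ?q = "qp v"
  define u' where "u' = u - inner u v *\<^sub>R z"
  have u'v: "inner u' v = 0" unfolding u'_def using z by (simp add: inner_diff_left)
  have u'q: "inner u' (?q - z) = inner u (vp v z)"
    unfolding u'_def vp_def by (simp add: inner_diff_left inner_diff_right algebra_simps inner_commute)
  have u'rho: "inner u' (e w) \<le> inner u' (e x)" if "x \<in> \<tau>" "w \<in> rho e P z" for x w
  proof -
    have "inner z (e w) = inner z (e x)" using rho_eq[OF _ that(2)] that(1) \<tau>(2) by blast
    then show ?thesis using u(2) that unfolding u'_def by (simp add: inner_diff_left)
  qed
  have fin\<tau>: "finite \<tau>" using \<tau>(2) rho_sub[of e P z] P by (meson finite_subset)
  have ev: "\<forall>\<^sub>F t in at_right (0::real). \<forall>x\<in>\<tau>. \<forall>w\<in>P. inner (z + t *\<^sub>R u') (e w) \<le> inner (z + t *\<^sub>R u') (e x)"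
  proof (intro eventually_ball_finite fin\<tau> P ballI)
    fix x w assume x: "x \<in> \<tau>" and w: "w \<in> P"
    show "\<forall>\<^sub>F t in at_right (0::real). inner (z + t *\<^sub>R u') (e w) \<le> inner (z + t *\<^sub>R u') (e x)"
    proof (cases "w \<in> rho e P z")
      case True
      have "inner z (e w) = inner z (e x)" using rho_eq[OF _ True] x \<tau>(2) by blast
      then have "\<forall>t>0. inner (z + t *\<^sub>R u') (e w) \<le> inner (z + t *\<^sub>R u') (e x)"
        using u'rho[OF x True] by (simp add: inner_add_left mult_left_mono)
      then show ?thesis using eventually_at_right_less[of 0] by (auto elim: eventually_mono)
    next
      case False
      then obtain w' where "w' \<in> P" "inner z (e w) < inner z (e w')" using w unfolding rho_def by force
      moreover have "inner z (e w') \<le> inner z (e x)" using x \<tau>(2) \<open>w' \<in> P\<close> unfolding rho_def by blast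
      ultimately have lt: "inner z (e w) - inner z (e x) < 0" by simp
      have "((\<lambda>t. inner (z + t *\<^sub>R u') (e w) - inner (z + t *\<^sub>R u') (e x)) \<longlongrightarrow>
             inner (z + 0 *\<^sub>R u') (e w) - inner (z + 0 *\<^sub>R u') (e x)) (at_right 0)"
        by (intro tendsto_intros)
      then have "\<forall>\<^sub>F t in at_right (0::real). inner (z + t *\<^sub>R u') (e w) - inner (z + t *\<^sub>R u') (e x) < 0"
        using lt by (intro order_tendstoD(2)) auto
      then show ?thesis by (auto elim: eventually_mono)
    qed
  qed
  have "\<forall>\<^sub>F t in at_right (0::real). 0 < t \<and> (\<forall>x\<in>\<tau>. \<forall>w\<in>P. inner (z + t *\<^sub>R u') (e w) \<le> inner (z + t *\<^sub>R u') (e x))"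
    using eventually_conj[OF eventually_at_right_less ev] .
  then obtain t where t: "0 < t" "\<forall>x\<in>\<tau>. \<forall>w\<in>P. inner (z + t *\<^sub>R u') (e w) \<le> inner (z + t *\<^sub>R u') (e x)"
    using eventually_happens'[OF trivial_limit_at_right_real] by blast
  have yC: "z + t *\<^sub>R u' \<in> Cs e P v \<tau>" using t z u'v unfolding Cs_def by (simp add: inner_add_left)
  have "inner (?q - zz e P v \<tau>) ((z + t *\<^sub>R u') - zz e P v \<tau>) \<le> 0"
    unfolding zz_def by (rule closest_point_dot[OF Cs_convex Cs_closed yC])
  then have "t * inner u' (?q - z) \<le> 0" unfolding zz by (simp add: inner_commute)
  moreover have "0 < t * inner u' (?q - z)" using t(1) u(1) u'q by simp
  ultimately show False by simp
qed

lemma vp_ne: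
  assumes v: "v \<noteq> 0" and z: "inner z v = 1" and ne: "z \<noteq> qp v"
  shows "vp v z \<noteq> 0"
proof
  assume h: "vp v z = 0"
  let ?c = "inner z (qp v - z)"
  have "qp v - z = ?c *\<^sub>R v" using h unfolding vp_def by simp
  moreover have "inner (qp v - z) v = 0" using qp_v[OF v] z by (simp add: inner_diff_left)
  ultimately have "?c * inner v v = 0" by (metis inner_scaleR_left)
  then have "?c = 0" using v by simp
  then have "qp v - z = 0" using \<open>qp v - z = ?c *\<^sub>R v\<close> by simp
  then show False using ne by simp
qed

lemma vp_q: "vp v (qp v) = 0"
  unfolding vp_def by simp

lemma symd_eq_empty: "symd A B = {} \<longleftrightarrow> A = B"
  unfolding symd_def by blast

lemma sd_mono: "K1 \<subseteq> K2 \<Longrightarrow> simplices_of_dim K1 j \<subseteq> simplices_of_dim K2 j"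
  unfolding simplices_of_dim_def by blast

lemma facets_single: "facets {a} = {{}}"
  unfolding facets_def by auto

lemma card_facet: "finite s \<Longrightarrow> f \<in> facets s \<Longrightarrow> card f = card s - 1"
  unfolding facets_iff by auto

lemma sum_Un_le_nat: "finite A \<Longrightarrow> finite B \<Longrightarrow> sum (g::'x \<Rightarrow> nat) (A \<union> B) \<le> sum g A + sum g B"
  by (simp add: sum_Un_nat)

theorem Ucx_acyclic:
  fixes e :: "'b \<Rightarrow> 'c::euclidean_space"
  assumes "finite P" "P \<noteq> {}" "v \<noteq> 0"
  shows "Ucx e P v \<noteq> {} \<and> (\<forall>j. reduced_betti_zero (Ucx e P v) j)"
  using assms
proof (induction "card P" arbitrary: P v rule: less_induct)
  case less
  note P = less.prems
  note outerIH = less.hyps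
  let ?K = "Ucx e P v"
  let ?f = "ff e P v" and ?z = "zz e P v" and ?q = "qp v"
  have finK: "finite ?K" by (rule Ucx_finite[OF P(1)])
  have Kne: "?K \<noteq> {}"
  proof -
    let ?m = "Max ((\<lambda>w. inner v (e w)) ` P)"
    have "?m \<in> (\<lambda>w. inner v (e w)) ` P" using P by (intro Max_in) auto
    then obtain w where w: "w \<in> P" "inner v (e w) = ?m" by (metis (no_types, lifting) imageE)
    have "\<forall>w'\<in>P. inner v (e w') \<le> inner v (e w)" using w P(1) by (simp add: Max_ge)
    then have "{w} \<in> ?K" unfolding Ucx_def using w(1) P(3) by (auto intro!: exI[of _ v])
    then show ?thesis by blast
  qed
  have "reduced_betti_zero ?K j" for j
  proof (cases "P \<in> ?K")
    case True
    then obtain u where u: "0 < inner u v" "\<forall>x\<in>P. \<forall>w\<in>P. inner u (e w) \<le> inner u (e x)"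
      unfolding Ucx_def by blast
    have "?K = fsimp P"
    proof
      show "?K \<subseteq> fsimp P" unfolding Ucx_def fsimp_def by blast
      show "fsimp P \<subseteq> ?K"
      proof
        fix s assume "s \<in> fsimp P"
        then have "s \<noteq> {}" "s \<subseteq> P" unfolding fsimp_def by auto
        then show "s \<in> ?K" unfolding Ucx_def using u by blast
      qed
    qed
    then show ?thesis using simplex_rbz[OF P(1) P(2)] by simp
  next
    case notfull: False
    define r where "r \<tau> = card {t\<in>?K. ?f t < ?f \<tau>}" for \<tau>
    define B where "B = card ?K + 1"
    define \<mu> where "\<mu> C = (\<Sum>\<tau>\<in>C. B ^ r \<tau>)" for C
    have B1: "1 \<le> B" unfolding B_def by simp
    have rlt: "r d < r \<sigma>" if "d \<in> ?K" "?f d < ?f \<sigma>" for d \<sigma>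
    proof -
      have "{t\<in>?K. ?f t < ?f d} \<subset> {t\<in>?K. ?f t < ?f \<sigma>}" using that by auto
      then show ?thesis unfolding r_def using finK by (intro psubset_card_mono) auto
    qed
    have main: "\<forall>C. \<mu> C = n \<longrightarrow> finite C \<and> C \<subseteq> simplices_of_dim ?K j \<and> boundary C = {} \<longrightarrow>
        (\<exists>D. finite D \<and> D \<subseteq> simplices_of_dim ?K (Suc j) \<and> boundary D = C)" for n
    proof (induction n rule: less_induct)
      case (less n)
      show ?case
      proof (intro allI impI)
        fix C assume \<mu>C: "\<mu> C = n" and Cc: "finite C \<and> C \<subseteq> simplices_of_dim ?K j \<and> boundary C = {}"
        have Cfin: "finite C" and Csd: "C \<subseteq> simplices_of_dim ?K j" and Cb: "boundary C = {}"
          using Cc by auto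
        show "\<exists>D. finite D \<and> D \<subseteq> simplices_of_dim ?K (Suc j) \<and> boundary D = C"
        proof (cases "C = {}")
          case True then show ?thesis by (intro exI[of _ "{}"]) auto
        next
          case Cne: False
          have CK: "C \<subseteq> ?K" using Csd unfolding simplices_of_dim_def by auto
          have finel: "\<forall>s\<in>C. finite s" using CK Ucx_elem_finite[OF P(1)] by blast
          define M where "M = Max (?f ` C)"
          have "M \<in> ?f ` C" unfolding M_def using Cfin Cne by (intro Max_in) auto
          then obtain \<sigma>0 where \<sigma>0: "\<sigma>0 \<in> C" "?f \<sigma>0 = M" by blast
          have Mge: "\<forall>\<tau>\<in>C. ?f \<tau> \<le> M" unfolding M_def using Cfin by simp
          define z where "z = ?z \<sigma>0"
          define \<rho> where "\<rho> = rho e P z"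
          define A where "A = Ucx e \<rho> (vp v z)"
          define Cz where "Cz = {\<tau>\<in>C. ?z \<tau> = z}"
          have \<sigma>0K: "\<sigma>0 \<in> ?K" using \<sigma>0 CK by blast
          have \<sigma>0ne: "\<sigma>0 \<noteq> {}" using \<sigma>0K unfolding Ucx_def by blast
          have zC: "z \<in> Cs e P v \<sigma>0" unfolding z_def by (rule zz_in[OF \<sigma>0K])
          have zv: "inner z v = 1" using zC unfolding Cs_def by blast
          have fz: "M = dist ?q z" using \<sigma>0(2) unfolding ff_def z_def by simp
          have \<sigma>0\<rho>: "\<sigma>0 \<subseteq> \<rho>" unfolding \<rho>_def z_def by (rule in_rho[OF \<sigma>0K])
          have \<rho>P: "\<rho> \<subseteq> P" "\<rho> \<noteq> P" unfolding \<rho>_def z_def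
            using rho_sub[of e P "zz e P v \<sigma>0"] rho_ne_P[OF \<sigma>0K notfull] by auto
          have \<rho>fin: "finite \<rho>" using \<rho>P(1) P(1) by (rule finite_subset)
          have \<rho>ne: "\<rho> \<noteq> {}" using \<sigma>0\<rho> \<sigma>0ne by blast
          have card\<rho>: "card \<rho> < card P" using \<rho>P P(1) by (intro psubset_card_mono) auto
          have \<Delta>K: "fsimp \<rho> \<subseteq> ?K"
          proof
            fix s assume "s \<in> fsimp \<rho>"
            then have "s \<noteq> {}" "s \<subseteq> rho e P z" unfolding fsimp_def \<rho>_def by auto
            then show "s \<in> ?K" by (rule rho_Ucx(1)[OF zv])
          qed
          have Asub: "A \<subseteq> fsimp \<rho>" unfolding A_def Ucx_def fsimp_def by blast
          have CzC: "Cz \<subseteq> C" unfolding Cz_def by blast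
          have Czfin: "finite Cz" using CzC Cfin by (rule finite_subset)
          have Cz\<rho>: "\<tau> \<subseteq> \<rho>" "\<tau> \<noteq> {}" if "\<tau> \<in> Cz" for \<tau>
          proof -
            have "\<tau> \<in> ?K" "?z \<tau> = z" using that CzC CK unfolding Cz_def by auto
            then show "\<tau> \<subseteq> \<rho>" "\<tau> \<noteq> {}" unfolding \<rho>_def using in_rho[of \<tau> e P v]
              unfolding Ucx_def by auto
          qed
          have CzA: "\<tau> \<notin> A" if "\<tau> \<in> Cz" for \<tau>
            unfolding A_def \<rho>_def
            using F3b[OF P(1) zv Cz\<rho>(2)[OF that] Cz\<rho>(1)[OF that, unfolded \<rho>_def]] that
            unfolding Cz_def by blast
          have bCz: "boundary Cz = boundary (C - Cz)"
          proof -
            have "C = symd Cz (C - Cz)" using CzC by auto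
            then have "boundary C = boundary (symd Cz (C - Cz))" by (rule arg_cong)
            also have "\<dots> = symd (boundary Cz) (boundary (C - Cz))"
              using Czfin Cfin by (intro boundary_symd) auto
            finally have "boundary C = symd (boundary Cz) (boundary (C - Cz))" .
            then show ?thesis using Cb symd_eq_empty by metis
          qed
          have bCzA: "f = {} \<or> f \<in> A" if fb: "f \<in> boundary Cz" for f
          proof (rule ccontr)
            assume "\<not> (f = {} \<or> f \<in> A)"
            then have fne: "f \<noteq> {}" and fA: "f \<notin> A" by auto
            obtain \<tau> where \<tau>: "\<tau> \<in> Cz" "f \<in> facets \<tau>" using boundary_sub[OF fb] by blast
            have f\<rho>: "f \<subseteq> \<rho>" using facet_sub[OF \<tau>(2)] Cz\<rho>(1)[OF \<tau>(1)] by blast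
            have zzf: "?z f = z"
              using F3a[OF P(3) zv fne f\<rho>[unfolded \<rho>_def]] fA unfolding A_def \<rho>_def by blast
            have "f \<in> boundary (C - Cz)" using fb bCz by simp
            then obtain \<tau>' where \<tau>': "\<tau>' \<in> C - Cz" "f \<in> facets \<tau>'" using boundary_sub by blast
            have \<tau>'K: "\<tau>' \<in> ?K" using \<tau>' CK by blast
            have f\<tau>': "f \<subseteq> \<tau>'" using facet_sub[OF \<tau>'(2)] .
            have "?f f \<le> ?f \<tau>'" by (rule ff_mono(1)[OF \<tau>'K f\<tau>'])
            moreover have "?f \<tau>' \<le> M" using Mge \<tau>' by blast
            moreover have "?f f = M" unfolding ff_def zzf fz ..
            ultimately have "?f f = ?f \<tau>'" by simp
            then have "?z f = ?z \<tau>'" by (rule ff_mono(2)[OF \<tau>'K f\<tau>'])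
            then have "\<tau>' \<in> Cz" using zzf \<tau>' unfolding Cz_def by simp
            then show False using \<tau>' by blast
          qed
          have zq: "Cz = C" if "z = ?q"
          proof -
            have "?z \<tau> = z" if "\<tau> \<in> C" for \<tau>
            proof -
              have "?f \<tau> \<le> 0" using Mge that fz \<open>z = ?q\<close> by simp
              then have "dist ?q (?z \<tau>) = 0" unfolding ff_def by (simp add: order_antisym)
              then show ?thesis using \<open>z = ?q\<close> by simp
            qed
            then show ?thesis unfolding Cz_def by blast
          qed
          obtain D where D: "finite D" "D \<subseteq> simplices_of_dim A j" "boundary D = boundary Cz"
          proof (cases "boundary Cz = {}")
            case True
            then show ?thesis using that[of "{}"] by simp
          next
            case bne: False
            have zq': "z \<noteq> ?q" using zq bne Cb by auto
            have vpne: "vp v z \<noteq> 0" by (rule vp_ne[OF P(3) zv zq'])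
            have IH: "A \<noteq> {} \<and> (\<forall>j. reduced_betti_zero A j)"
              unfolding A_def by (rule outerIH[OF card\<rho> \<rho>fin \<rho>ne vpne])
            show ?thesis
            proof (cases j)
              case 0
              obtain s where s: "s \<in> A" using IH by blast
              then obtain a where a: "a \<in> s" unfolding A_def Ucx_def by blast
              have aA: "{a} \<in> A" unfolding A_def using Ucx_sub[OF s[unfolded A_def]] a by blast
              have "\<forall>s\<in>Cz. card s = 1" using CzC Csd 0 unfolding simplices_of_dim_def by auto
              then have "boundary Cz = {{}}" using boundary_vertices[OF Czfin] bne by (auto split: if_splits)
              moreover have "{{a}} \<subseteq> simplices_of_dim A j" using aA 0 unfolding simplices_of_dim_def by simp
              ultimately show ?thesis using that[of "{{a}}"] by (simp add: facets_single)
            next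
              case (Suc i)
              have "boundary Cz \<subseteq> simplices_of_dim A i"
              proof
                fix f assume fb: "f \<in> boundary Cz"
                obtain \<tau> where \<tau>: "\<tau> \<in> Cz" "f \<in> facets \<tau>" using boundary_sub[OF fb] by blast
                have "card \<tau> = Suc (Suc i)" "finite \<tau>"
                  using \<tau>(1) CzC Csd Suc finel unfolding simplices_of_dim_def by auto
                then have "card f = Suc i" using card_facet[OF _ \<tau>(2)] by simp
                then have "f \<noteq> {}" by auto
                then have "f \<in> A" using bCzA[OF fb] by blast
                then show "f \<in> simplices_of_dim A i" using \<open>card f = Suc i\<close> unfolding simplices_of_dim_def by simp
              qed
              moreover have "finite (boundary Cz)" using Czfin finel CzC by (intro finite_boundary) auto
              moreover have "boundary (boundary Cz) = {}" using Czfin finel CzC by (intro boundary_boundary) auto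
              ultimately obtain D where "finite D" "D \<subseteq> simplices_of_dim A (Suc i)" "boundary D = boundary Cz"
                using IH unfolding rbz_iff by blast
              then show ?thesis using that Suc by blast
            qed
          qed
          define E where "E = symd Cz D"
          have Efin: "finite E" unfolding E_def using Czfin D(1) by simp
          have ESd: "E \<subseteq> simplices_of_dim (fsimp \<rho>) j"
          proof -
            have "Cz \<subseteq> simplices_of_dim (fsimp \<rho>) j"
              using CzC Csd Cz\<rho> unfolding simplices_of_dim_def fsimp_def by blast
            moreover have "D \<subseteq> simplices_of_dim (fsimp \<rho>) j" using D(2) sd_mono[OF Asub] by blast
            ultimately show ?thesis unfolding E_def symd_def by blast
          qed
          have Eb: "boundary E = {}" unfolding E_def using boundary_symd[OF Czfin D(1)] D(3) by simp
          obtain a where a: "a \<in> \<rho>" using \<rho>ne by blast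
          obtain F where F: "finite F" "F \<subseteq> simplices_of_dim (fsimp \<rho>) (Suc j)" "boundary F = E"
            using simplex_acyclic[OF \<rho>fin a Efin ESd Eb] by blast
          define C' where "C' = symd C E"
          have C'fin: "finite C'" unfolding C'_def using Cfin Efin by simp
          have C'sd: "C' \<subseteq> simplices_of_dim ?K j"
            unfolding C'_def using Csd ESd sd_mono[OF \<Delta>K] unfolding symd_def by blast
          have C'b: "boundary C' = {}" unfolding C'_def using boundary_symd[OF Cfin Efin] Cb Eb by simp
          have Dlt: "?f d < M" "d \<in> ?K" if "d \<in> D" for d
          proof -
            have dA: "d \<in> A" using that D(2) unfolding simplices_of_dim_def by blast
            then have d\<rho>: "d \<subseteq> \<rho>" "d \<noteq> {}" unfolding A_def Ucx_def by auto
            show "d \<in> ?K" using \<Delta>K d\<rho> unfolding fsimp_def by blast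
            have "z \<in> Cs e P v d" using rho_Ucx(2)[OF zv d\<rho>(2) d\<rho>(1)[unfolded \<rho>_def]] .
            then have le: "?f d \<le> M" using zz_le fz by metis
            show "?f d < M"
            proof (rule ccontr)
              assume "\<not> ?f d < M"
              then have "?f d = dist ?q z" using le fz by simp
              then have "?z d = z" using F3c[OF zv d\<rho>(2) d\<rho>(1)[unfolded \<rho>_def]] by blast
              then have "d \<notin> A" unfolding A_def \<rho>_def
                using F3b[OF P(1) zv d\<rho>(2) d\<rho>(1)[unfolded \<rho>_def]] by blast
              then show False using dA by blast
            qed
          qed
          let ?R = "r \<sigma>0"
          have rD: "r d < ?R" if "d \<in> D" for d using rlt[OF Dlt(2)[OF that]] Dlt(1)[OF that] \<sigma>0(2) by simp
          have \<mu>D: "\<mu> D < B ^ ?R"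
          proof (cases "D = {}")
            case True then show ?thesis unfolding \<mu>_def using B1 by simp
          next
            case False
            then obtain d where "d \<in> D" by blast
            then have R1: "1 \<le> ?R" using rD by fastforce
            have "\<mu> D \<le> card D * B ^ (?R - 1)"
            proof -
              have "B ^ r d \<le> B ^ (?R - 1)" if "d \<in> D" for d
              proof -
                have "r d \<le> ?R - 1" using rD that by fastforce
                then show "B ^ r d \<le> B ^ (?R - 1)" using B1 by (intro power_increasing)
              qed
              then have "(\<Sum>d\<in>D. B ^ r d) \<le> of_nat (card D) * B ^ (?R - 1)"
                by (rule sum_bounded_above)
              then show ?thesis unfolding \<mu>_def by simp
            qed
            also have "\<dots> \<le> card ?K * B ^ (?R - 1)"
            proof -
              have "D \<subseteq> ?K" using Dlt(2) by blast
              then have "card D \<le> card ?K" using finK by (rule card_mono[rotated])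
              then show ?thesis by simp
            qed
            also have "\<dots> < B * B ^ (?R - 1)"
            proof -
              have pos: "0 < B ^ (?R - 1)" using B1 by simp
              have "\<And>k x::nat. 0 < x \<Longrightarrow> k * x < (k + 1) * x" by simp
              from this[OF pos, of "card ?K"] show ?thesis unfolding B_def .
            qed
            also have "\<dots> = B ^ ?R" using R1 by (cases "r \<sigma>0") simp_all
            finally show ?thesis .
          qed
          have \<mu>Cz: "B ^ ?R \<le> \<mu> Cz"
          proof -
            have "\<sigma>0 \<in> Cz" unfolding Cz_def z_def using \<sigma>0 by simp
            then show ?thesis unfolding \<mu>_def using Czfin by (intro member_le_sum) auto
          qed
          have "\<mu> C' \<le> \<mu> ((C - Cz) \<union> D)"
          proof -
            have "C' \<subseteq> (C - Cz) \<union> D" unfolding C'_def E_def using CzC by auto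
            then show ?thesis unfolding \<mu>_def using Cfin D(1) by (intro sum_mono2) auto
          qed
          also have "\<dots> \<le> \<mu> (C - Cz) + \<mu> D" unfolding \<mu>_def using Cfin D(1) by (intro sum_Un_le_nat) auto
          also have "\<dots> < \<mu> (C - Cz) + \<mu> Cz" using \<mu>D \<mu>Cz by simp
          also have "\<dots> = \<mu> C" unfolding \<mu>_def using sum.subset_diff[OF CzC Cfin] by metis
          finally have "\<mu> C' < n" using \<mu>C by simp
          then obtain G where G: "finite G" "G \<subseteq> simplices_of_dim ?K (Suc j)" "boundary G = C'"
            using less[of "\<mu> C'"] C'fin C'sd C'b by blast
          define D' where "D' = symd G F"
          have "boundary D' = symd C' E" unfolding D'_def using boundary_symd[OF G(1) F(1)] G(3) F(3) by simp
          also have "\<dots> = C" unfolding C'_def by auto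
          finally have "boundary D' = C" .
          moreover have "finite D'" unfolding D'_def using G(1) F(1) by simp
          moreover have "D' \<subseteq> simplices_of_dim ?K (Suc j)"
            unfolding D'_def using G(2) F(2) sd_mono[OF \<Delta>K] unfolding symd_def by blast
          ultimately show ?thesis by blast
        qed
      qed
    qed
    show ?thesis unfolding rbz_iff using main by blast
  qed
  then show ?case using Kne by blast
qed

section \<open>Delaunay complex as a maximizer complex\<close>

lemma dist_le_lift:
  fixes y x w :: "'a::euclidean_space"
  shows "dist y x \<le> dist y w \<longleftrightarrow> 2 * inner y w - inner w w \<le> 2 * inner y x - inner x x"
proof -
  have sq: "(dist y p)\<^sup>2 = inner y y - 2 * inner y p + inner p p" for p :: 'a
    by (simp add: dist_norm power2_norm_eq_inner inner_diff_left inner_diff_right inner_commute)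
  have "dist y x \<le> dist y w \<longleftrightarrow> (dist y x)\<^sup>2 \<le> (dist y w)\<^sup>2"
    by (meson power2_le_imp_le power_mono zero_le_dist)
  also have "\<dots> \<longleftrightarrow> 2 * inner y w - inner w w \<le> 2 * inner y x - inner x x"
    unfolding sq by linarith
  finally show ?thesis .
qed

definition lift :: "'a::euclidean_space \<Rightarrow> 'a \<times> real" where
  "lift x = (x, inner x x)"

lemma DEL_Ucx:
  fixes X :: "'a::euclidean_space set"
  shows "DEL X = Ucx lift X ((0::'a), -1::real)"
proof (rule set_eqI, rule iffI)
  fix \<sigma> assume "\<sigma> \<in> DEL X"
  then obtain y where s: "\<sigma> \<noteq> {}" "\<sigma> \<subseteq> X" and y: "\<forall>x\<in>\<sigma>. \<forall>z\<in>X. dist y x \<le> dist y z"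
    unfolding DEL_def by blast
  define u where "u = (2 *\<^sub>R y, -1::real)"
  have "0 < inner u ((0::'a), -1::real)" unfolding u_def by simp
  moreover have "\<forall>x\<in>\<sigma>. \<forall>w\<in>X. inner u (lift w) \<le> inner u (lift x)"
    using y unfolding u_def lift_def dist_le_lift by simp
  ultimately show "\<sigma> \<in> Ucx lift X ((0::'a), -1::real)" unfolding Ucx_def using s by blast
next
  fix \<sigma> assume "\<sigma> \<in> Ucx lift X ((0::'a), -1::real)"
  then obtain u where s: "\<sigma> \<noteq> {}" "\<sigma> \<subseteq> X" and u: "0 < inner u ((0::'a), -1::real)"
    and ineq: "\<forall>x\<in>\<sigma>. \<forall>w\<in>X. inner u (lift w) \<le> inner u (lift x)"
    unfolding Ucx_def by blast
  obtain a b where ab: "u = (a, b)" by (cases u)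
  have b: "0 < - b" using u ab by simp
  define y where "y = (1 / (- 2 * b)) *\<^sub>R a"
  have "dist y x \<le> dist y w" if "x \<in> \<sigma>" "w \<in> X" for x w
  proof -
    have "inner a w + b * inner w w \<le> inner a x + b * inner x x"
      using ineq that unfolding ab lift_def by simp
    then have le: "(inner a w + b * inner w w) / (- b) \<le> (inner a x + b * inner x x) / (- b)"
      using b by (intro divide_right_mono) auto
    have h: "(inner a p + b * inner p p) / (- b) = 2 * inner y p - inner p p" for p
      unfolding y_def using b by (simp add: field_simps)
    show ?thesis unfolding dist_le_lift using le h[of w] h[of x] by linarith
  qed
  then show "\<sigma> \<in> DEL X" unfolding DEL_def using s by blast
qed

lemma DEL_rbz:
  fixes X :: "'a::euclidean_space set"
  assumes "finite X"
  shows "reduced_betti_zero (DEL X) j"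
proof (cases "X = {}")
  case True
  then have "DEL X = {}" unfolding DEL_def by auto
  then show ?thesis unfolding rbz_iff simplices_of_dim_def by auto
next
  case False
  have "((0::'a), -1::real) \<noteq> 0" by (simp add: zero_prod_def)
  then show ?thesis unfolding DEL_Ucx using Ucx_acyclic[OF assms False] by blast
qed

lemma DEL_sub: "\<sigma> \<in> DEL X \<Longrightarrow> \<tau> \<noteq> {} \<Longrightarrow> \<tau> \<subseteq> \<sigma> \<Longrightarrow> \<tau> \<in> DEL X"
  unfolding DEL_def by blast

lemma DEL_elem_finite: "finite X \<Longrightarrow> \<sigma> \<in> DEL X \<Longrightarrow> finite \<sigma>"
  unfolding DEL_def by (auto intro: finite_subset)

lemma DEL_elem_sub: "\<sigma> \<in> DEL X \<Longrightarrow> \<sigma> \<subseteq> X"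
  unfolding DEL_def by blast

lemma DEL_finite: "finite X \<Longrightarrow> finite (DEL X)"
  by (rule finite_subset[of _ "Pow X"]) (auto simp: DEL_def)

lemma sd_finite: "finite X \<Longrightarrow> finite (simplices_of_dim (DEL X) k)"
  unfolding simplices_of_dim_def using DEL_finite[of X] by simp

lemma facets_sd:
  assumes "finite X" "\<sigma> \<in> simplices_of_dim (DEL X) (Suc k)"
  shows "facets \<sigma> \<subseteq> simplices_of_dim (DEL X) k"
proof
  fix f assume f: "f \<in> facets \<sigma>"
  have s: "\<sigma> \<in> DEL X" "card \<sigma> = Suc (Suc k)" using assms(2) unfolding simplices_of_dim_def by auto
  have fin: "finite \<sigma>" using DEL_elem_finite[OF assms(1) s(1)] .
  have cf: "card f = Suc k" using card_facet[OF fin f] s(2) by simp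
  then have "f \<noteq> {}" by auto
  then have "f \<in> DEL X" using DEL_sub[OF s(1)] facet_sub[OF f] by blast
  then show "f \<in> simplices_of_dim (DEL X) k" using cf unfolding simplices_of_dim_def by simp
qed

lemma facets_ne: "\<sigma> \<noteq> {} \<Longrightarrow> facets \<sigma> \<noteq> {}"
  unfolding facets_def by auto

section \<open>Strict total orders\<close>

definition sto :: "('x \<Rightarrow> 'x \<Rightarrow> bool) \<Rightarrow> 'x set \<Rightarrow> bool" where
  "sto R A \<longleftrightarrow> (\<forall>s\<in>A. \<not> R s s) \<and> (\<forall>s\<in>A. \<forall>t\<in>A. \<forall>u\<in>A. R s t \<longrightarrow> R t u \<longrightarrow> R s u) \<and>
     (\<forall>s\<in>A. \<forall>t\<in>A. s \<noteq> t \<longrightarrow> R s t \<or> R t s)"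

lemma sto_irr: "sto R A \<Longrightarrow> s \<in> A \<Longrightarrow> \<not> R s s"
proof -
  assume a: "sto R A" "s \<in> A"
  have "\<forall>s\<in>A. \<not> R s s" using a(1) unfolding sto_def by (rule conjunct1)
  then show "\<not> R s s" using a(2) by blast
qed

lemma sto_trans: "sto R A \<Longrightarrow> s \<in> A \<Longrightarrow> t \<in> A \<Longrightarrow> u \<in> A \<Longrightarrow> R s t \<Longrightarrow> R t u \<Longrightarrow> R s u"
proof -
  assume a: "sto R A" "s \<in> A" "t \<in> A" "u \<in> A" "R s t" "R t u"
  have "\<forall>s\<in>A. \<forall>t\<in>A. \<forall>u\<in>A. R s t \<longrightarrow> R t u \<longrightarrow> R s u"
    using a(1) unfolding sto_def by (rule conjunct1[OF conjunct2])
  then show "R s u" using a(2-6) by blast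
qed

lemma sto_total: "sto R A \<Longrightarrow> s \<in> A \<Longrightarrow> t \<in> A \<Longrightarrow> s \<noteq> t \<Longrightarrow> R s t \<or> R t s"
proof -
  assume a: "sto R A" "s \<in> A" "t \<in> A" "s \<noteq> t"
  have "\<forall>s\<in>A. \<forall>t\<in>A. s \<noteq> t \<longrightarrow> R s t \<or> R t s"
    using a(1) unfolding sto_def by (rule conjunct2[OF conjunct2])
  then show "R s t \<or> R t s" using a(2-4) by blast
qed

lemma stoI:
  assumes "\<And>s. s \<in> A \<Longrightarrow> \<not> R s s"
    "\<And>s t u. s \<in> A \<Longrightarrow> t \<in> A \<Longrightarrow> u \<in> A \<Longrightarrow> R s t \<Longrightarrow> R t u \<Longrightarrow> R s u"
    "\<And>s t. s \<in> A \<Longrightarrow> t \<in> A \<Longrightarrow> s \<noteq> t \<Longrightarrow> R s t \<or> R t s"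
  shows "sto R A"
  unfolding sto_def
proof (intro conjI ballI impI)
  fix s assume "s \<in> A" then show "\<not> R s s" by (rule assms(1))
next
  fix s t u assume "s \<in> A" "t \<in> A" "u \<in> A" "R s t" "R t u"
  then show "R s u" by (rule assms(2))
next
  fix s t assume "s \<in> A" "t \<in> A" "s \<noteq> t"
  then show "R s t \<or> R t s" by (rule assms(3))
qed

lemma sto_subset:
  assumes "sto R A" "B \<subseteq> A"
  shows "sto R B"
proof (rule stoI)
  fix s assume "s \<in> B"
  then have "s \<in> A" using assms(2) by auto
  then show "\<not> R s s" by (rule sto_irr[OF assms(1)])
next
  fix s t u assume "s \<in> B" "t \<in> B" "u \<in> B" "R s t" "R t u"
  then show "R s u" using sto_trans[OF assms(1)] assms(2) by (meson subsetD)
next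
  fix s t assume "s \<in> B" "t \<in> B" "s \<noteq> t"
  then show "R s t \<or> R t s" using sto_total[OF assms(1)] assms(2) by (meson subsetD)
qed

lemma sto_asym:
  assumes "sto R A" "s \<in> A" "t \<in> A" "R s t"
  shows "\<not> R t s"
proof
  assume "R t s"
  then have "R s s" using sto_trans[OF assms(1,2,3,2) assms(4)] by simp
  then show False using sto_irr[OF assms(1,2)] by simp
qed

lemma sto_max:
  assumes "finite F" "F \<noteq> {}" "sto R F"
  shows "\<exists>m\<in>F. \<forall>g\<in>F. g \<noteq> m \<longrightarrow> R g m"
  using assms
proof (induction F rule: finite_ne_induct)
  case (singleton x) then show ?case by simp
next
  case (insert x F)
  have "sto R F" using insert(5) sto_subset by blast
  then obtain m where m: "m \<in> F" "\<forall>g\<in>F. g \<noteq> m \<longrightarrow> R g m" using insert(4) by blast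
  have xm: "x \<noteq> m" using m(1) insert(3) by blast
  show ?case
  proof (cases "R m x")
    case True
    have "\<forall>g\<in>insert x F. g \<noteq> x \<longrightarrow> R g x"
    proof (intro ballI impI)
      fix g assume g: "g \<in> insert x F" "g \<noteq> x"
      then have gF: "g \<in> F" by simp
      show "R g x"
      proof (cases "g = m")
        case True then show ?thesis using \<open>R m x\<close> by simp
      next
        case False
        then have "R g m" using m gF by blast
        then show ?thesis using sto_trans[OF insert(5), of g m x] \<open>R m x\<close> gF m(1) by blast
      qed
    qed
    then show ?thesis by blast
  next
    case False
    then have "R x m" using sto_total[OF insert(5), of x m] xm m(1) by blast
    then show ?thesis using m by (intro bexI[of _ m]) auto
  qed
qed

lemma maxf_props:
  assumes "finite (facets \<sigma>)" "facets \<sigma> \<noteq> {}" "sto R (facets \<sigma>)"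
  shows "maxf R \<sigma> \<in> facets \<sigma>" "\<forall>g\<in>facets \<sigma>. g \<noteq> maxf R \<sigma> \<longrightarrow> R g (maxf R \<sigma>)"
proof -
  obtain m where m: "m \<in> facets \<sigma>" "\<forall>g\<in>facets \<sigma>. g \<noteq> m \<longrightarrow> R g m"
    using sto_max[OF assms] by blast
  have "maxf R \<sigma> = m" unfolding maxf_def
  proof (rule the_equality)
    show "m \<in> facets \<sigma> \<and> (\<forall>g\<in>facets \<sigma>. g \<noteq> m \<longrightarrow> R g m)" using m by blast
  next
    fix f assume f: "f \<in> facets \<sigma> \<and> (\<forall>g\<in>facets \<sigma>. g \<noteq> f \<longrightarrow> R g f)"
    show "f = m"
    proof (rule ccontr)
      assume "f \<noteq> m"
      then have "R m f" "R f m" using f m by auto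
      then show False using sto_asym[OF assms(3)] f m by blast
    qed
  qed
  then show "maxf R \<sigma> \<in> facets \<sigma>" "\<forall>g\<in>facets \<sigma>. g \<noteq> maxf R \<sigma> \<longrightarrow> R g (maxf R \<sigma>)"
    using m by auto
qed

lemma lexless_sto:
  assumes "inj_on \<iota> X"
  shows "sto (lexless \<iota>) {s. s \<subseteq> X \<and> finite s}"
proof -
  let ?r = "{(a, b). (a::nat) < b}"
  have tr: "trans ?r" unfolding trans_def by auto
  have irr: "\<forall>x. (x, x) \<notin> ?r" by auto
  have lin: "\<forall>a b. (a, b) \<in> ?r \<or> a = b \<or> (b, a) \<in> ?r" by auto
  have eq: "s = t" if "s \<subseteq> X" "t \<subseteq> X" "finite s" "finite t"
    "sorted_list_of_set (\<iota> ` s) = sorted_list_of_set (\<iota> ` t)" for s t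
  proof -
    have "set (sorted_list_of_set (\<iota> ` s)) = set (sorted_list_of_set (\<iota> ` t))" using that(5) by simp
    then have "\<iota> ` s = \<iota> ` t" using that(3,4) by simp
    then show ?thesis using inj_on_image_eq_iff[OF assms that(1,2)] by simp
  qed
  show ?thesis
  proof (rule stoI)
    fix s show "\<not> lexless \<iota> s s" unfolding lexless_def
      using lexord_irreflexive[OF irr] by blast
  next
    fix s t u assume "lexless \<iota> s t" "lexless \<iota> t u"
    then show "lexless \<iota> s u" unfolding lexless_def
      using lexord_trans tr by blast
  next
    fix s t assume s: "s \<in> {s. s \<subseteq> X \<and> finite s}" and t: "t \<in> {s. s \<subseteq> X \<and> finite s}" and st: "s \<noteq> t"
    have "sorted_list_of_set (\<iota> ` s) \<noteq> sorted_list_of_set (\<iota> ` t)" using eq s t st by blast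
    then show "lexless \<iota> s t \<or> lexless \<iota> t s" unfolding lexless_def
      using lexord_linear[OF lin] by blast
  qed
qed

lemma sd_sub_fin:
  assumes "finite X"
  shows "simplices_of_dim (DEL X) k \<subseteq> {s. s \<subseteq> X \<and> finite s}"
  using DEL_elem_finite[OF assms] DEL_elem_sub unfolding simplices_of_dim_def by blast

lemma prec_sto_Suc:
  assumes X: "finite X" "inj_on \<iota> X"
  shows "sto (prec \<iota> (Suc m)) (simplices_of_dim (DEL X) (Suc m))"
proof (induction m)
  case 0
  have L: "sto (lexless \<iota>) (simplices_of_dim (DEL X) (Suc 0))"
    using sto_subset[OF lexless_sto[OF X(2)] sd_sub_fin[OF X(1)]] .
  have eq0: "prec \<iota> (Suc 0) = (\<lambda>s t. diameter s < diameter t \<or> (diameter s = diameter t \<and> lexless \<iota> s t))"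
    by simp
  show ?case unfolding eq0
  proof (rule stoI)
    fix s assume "s \<in> simplices_of_dim (DEL X) (Suc 0)"
    then show "\<not> (diameter s < diameter s \<or> (diameter s = diameter s \<and> lexless \<iota> s s))"
      using sto_irr[OF L] by blast
  next
    fix s t u assume s: "s \<in> simplices_of_dim (DEL X) (Suc 0)" and t: "t \<in> simplices_of_dim (DEL X) (Suc 0)"
      and u: "u \<in> simplices_of_dim (DEL X) (Suc 0)"
      and st: "diameter s < diameter t \<or> (diameter s = diameter t \<and> lexless \<iota> s t)"
      and tu: "diameter t < diameter u \<or> (diameter t = diameter u \<and> lexless \<iota> t u)"
    have "lexless \<iota> s t \<Longrightarrow> lexless \<iota> t u \<Longrightarrow> lexless \<iota> s u" using sto_trans[OF L s t u] .
    then show "diameter s < diameter u \<or> (diameter s = diameter u \<and> lexless \<iota> s u)"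
      using st tu by auto
  next
    fix s t assume s: "s \<in> simplices_of_dim (DEL X) (Suc 0)" and t: "t \<in> simplices_of_dim (DEL X) (Suc 0)"
      and st: "s \<noteq> t"
    have "lexless \<iota> s t \<or> lexless \<iota> t s" using sto_total[OF L s t st] .
    then show "(diameter s < diameter t \<or> (diameter s = diameter t \<and> lexless \<iota> s t)) \<or>
               (diameter t < diameter s \<or> (diameter t = diameter s \<and> lexless \<iota> t s))"
      by auto
  qed
next
  case (Suc m)
  let ?R = "prec \<iota> (Suc m)"
  let ?A = "simplices_of_dim (DEL X) (Suc m)"
  let ?B = "simplices_of_dim (DEL X) (Suc (Suc m))"
  have L: "sto (lexless \<iota>) ?B"
    using sto_subset[OF lexless_sto[OF X(2)] sd_sub_fin[OF X(1)]] .
  have mx: "maxf ?R s \<in> ?A" "maxf ?R s \<in> facets s" if "s \<in> ?B" for s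
  proof -
    have fs: "facets s \<subseteq> ?A" using facets_sd[OF X(1) that] .
    have "finite s" "s \<noteq> {}" using that DEL_elem_finite[OF X(1)] unfolding simplices_of_dim_def by auto
    then have "finite (facets s)" "facets s \<noteq> {}" using facets_ne by auto
    then show "maxf ?R s \<in> facets s" using maxf_props(1)[OF _ _ sto_subset[OF Suc fs]] by blast
    then show "maxf ?R s \<in> ?A" using fs by blast
  qed
  have eq: "prec \<iota> (Suc (Suc m)) = (\<lambda>s t. ?R (maxf ?R s) (maxf ?R t) \<or> (maxf ?R s = maxf ?R t \<and> lexless \<iota> s t))"
    by (simp add: Let_def)
  show ?case unfolding eq
  proof (rule stoI)
    fix s assume s: "s \<in> ?B"
    have "\<not> ?R (maxf ?R s) (maxf ?R s)" using sto_irr[OF Suc mx(1)[OF s]] .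
    moreover have "\<not> lexless \<iota> s s" using sto_irr[OF L s] .
    ultimately show "\<not> (?R (maxf ?R s) (maxf ?R s) \<or> (maxf ?R s = maxf ?R s \<and> lexless \<iota> s s))"
      by blast
  next
    fix s t u assume s: "s \<in> ?B" and t: "t \<in> ?B" and u: "u \<in> ?B"
      and st: "?R (maxf ?R s) (maxf ?R t) \<or> (maxf ?R s = maxf ?R t \<and> lexless \<iota> s t)"
      and tu: "?R (maxf ?R t) (maxf ?R u) \<or> (maxf ?R t = maxf ?R u \<and> lexless \<iota> t u)"
    have tR: "?R (maxf ?R s) (maxf ?R t) \<Longrightarrow> ?R (maxf ?R t) (maxf ?R u) \<Longrightarrow> ?R (maxf ?R s) (maxf ?R u)"
      using sto_trans[OF Suc mx(1)[OF s] mx(1)[OF t] mx(1)[OF u]] .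
    have tL: "lexless \<iota> s t \<Longrightarrow> lexless \<iota> t u \<Longrightarrow> lexless \<iota> s u"
      using sto_trans[OF L s t u] .
    show "?R (maxf ?R s) (maxf ?R u) \<or> (maxf ?R s = maxf ?R u \<and> lexless \<iota> s u)"
      using st tu tR tL by auto
  next
    fix s t assume s: "s \<in> ?B" and t: "t \<in> ?B" and st: "s \<noteq> t"
    show "(?R (maxf ?R s) (maxf ?R t) \<or> (maxf ?R s = maxf ?R t \<and> lexless \<iota> s t)) \<or>
          (?R (maxf ?R t) (maxf ?R s) \<or> (maxf ?R t = maxf ?R s \<and> lexless \<iota> t s))"
    proof (cases "maxf ?R s = maxf ?R t")
      case True then show ?thesis using sto_total[OF L s t st] by auto
    next
      case False then show ?thesis using sto_total[OF Suc mx(1)[OF s] mx(1)[OF t] False] by auto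
    qed
  qed
qed

lemma prec_sto:
  assumes "finite X" "inj_on \<iota> X" "1 \<le> k"
  shows "sto (prec \<iota> k) (simplices_of_dim (DEL X) k)"
proof -
  obtain m where "k = Suc m" using assms(3) by (cases k) auto
  then show ?thesis using prec_sto_Suc[OF assms(1,2)] by simp
qed

section \<open>Linear algebra over GF(2) with chains as sets\<close>

definition span :: "'x set set \<Rightarrow> 'x set set set" where
  "span T = {boundary B | B. B \<subseteq> T}"

definition indep :: "'x set set \<Rightarrow> bool" where
  "indep S \<longleftrightarrow> (\<forall>C. C \<subseteq> S \<longrightarrow> boundary C = {} \<longrightarrow> C = {})"

definition basis :: "'x set set \<Rightarrow> 'x set set set \<Rightarrow> 'x set set \<Rightarrow> bool" where
  "basis E Z S \<longleftrightarrow> S \<subseteq> E \<and> indep S \<and> Z \<subseteq> span S"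

lemma span_empty: "{} \<in> span T"
  unfolding span_def by (rule CollectI, rule exI[of _ "{}"]) simp

lemma span_facets: "\<sigma> \<in> T \<Longrightarrow> facets \<sigma> \<in> span T"
  unfolding span_def by (rule CollectI, rule exI[of _ "{\<sigma>}"]) simp

lemma span_mono: "T \<subseteq> T' \<Longrightarrow> span T \<subseteq> span T'"
  unfolding span_def by auto

lemma spanE: "a \<in> span T \<Longrightarrow> (\<And>B. B \<subseteq> T \<Longrightarrow> a = boundary B \<Longrightarrow> thesis) \<Longrightarrow> thesis"
  unfolding span_def by auto

lemma spanI: "B \<subseteq> T \<Longrightarrow> a = boundary B \<Longrightarrow> a \<in> span T"
  unfolding span_def by auto

lemma span_symd:
  assumes "finite T" "a \<in> span T" "b \<in> span T"
  shows "symd a b \<in> span T"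
proof -
  obtain B1 where B1: "B1 \<subseteq> T" "a = boundary B1" using assms(2) by (rule spanE)
  obtain B2 where B2: "B2 \<subseteq> T" "b = boundary B2" using assms(3) by (rule spanE)
  have f: "finite B1" "finite B2" using B1(1) B2(1) assms(1) by (auto intro: finite_subset)
  have "symd a b = boundary (symd B1 B2)" unfolding B1(2) B2(2) using boundary_symd[OF f] by simp
  moreover have "symd B1 B2 \<subseteq> T" using B1(1) B2(1) unfolding symd_def by auto
  ultimately show ?thesis by (intro spanI) auto
qed

lemma sum_in_span:
  assumes "finite T" "finite C" "\<forall>\<sigma>\<in>C. facets \<sigma> \<in> span T"
  shows "boundary C \<in> span T"
  using assms(2,3)
proof (induction C rule: finite_induct)
  case empty then show ?case using span_empty by simp
next
  case (insert s C)
  have "boundary (insert s C) = symd (facets s) (boundary C)" by (rule boundary_insert[OF insert(1,2)])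
  moreover have "facets s \<in> span T" using insert(4) by simp
  moreover have "boundary C \<in> span T" using insert(3,4) by simp
  ultimately show ?case using span_symd[OF assms(1)] by simp
qed

lemma span_insert:
  assumes "finite T" "facets \<sigma> \<in> span T"
  shows "span (insert \<sigma> T) \<subseteq> span T"
proof
  fix a assume "a \<in> span (insert \<sigma> T)"
  then obtain B where B: "B \<subseteq> insert \<sigma> T" "a = boundary B" by (rule spanE)
  have fB: "finite B" using B(1) assms(1) by (auto intro: finite_subset)
  show "a \<in> span T"
  proof (cases "\<sigma> \<in> B")
    case False
    then have "B \<subseteq> T" using B(1) by auto
    then show ?thesis using B(2) by (rule spanI)
  next
    case True
    have "B = insert \<sigma> (B - {\<sigma>})" using True by auto
    then have "boundary B = symd (facets \<sigma>) (boundary (B - {\<sigma>}))"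
      using boundary_insert[of "B - {\<sigma>}" \<sigma>] fB by simp
    moreover have "boundary (B - {\<sigma>}) \<in> span T" using B(1) by (intro spanI[of "B - {\<sigma>}"]) auto
    ultimately show ?thesis using span_symd[OF assms(1) assms(2)] B(2) by simp
  qed
qed

lemma indep_unique:
  assumes "indep S" "finite S" "B1 \<subseteq> S" "B2 \<subseteq> S" "boundary B1 = boundary B2"
  shows "B1 = B2"
proof -
  have f: "finite B1" "finite B2" using assms(2-4) by (auto intro: finite_subset)
  have "boundary (symd B1 B2) = {}" using boundary_symd[OF f] assms(5) by simp
  moreover have "symd B1 B2 \<subseteq> S" using assms(3,4) unfolding symd_def by auto
  ultimately have "symd B1 B2 = {}" using assms(1) unfolding indep_def by blast
  then show ?thesis using symd_eq_empty by metis
qed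

lemma not_in_span_rm:
  assumes "indep S" "finite S" "\<sigma> \<in> S"
  shows "facets \<sigma> \<notin> span (S - {\<sigma>})"
proof
  assume "facets \<sigma> \<in> span (S - {\<sigma>})"
  then obtain B where B: "B \<subseteq> S - {\<sigma>}" "facets \<sigma> = boundary B" by (rule spanE)
  have "{\<sigma>} = B" using indep_unique[OF assms(1,2), of "{\<sigma>}" B] B assms(3) by auto
  then show False using B(1) by auto
qed

lemma exchange:
  assumes E: "finite E" and S: "basis E Z S" and \<sigma>: "\<sigma> \<in> S" and \<tau>: "\<tau> \<in> E" "\<tau> \<notin> S"
    and Z\<tau>: "facets \<tau> \<in> Z" and ns: "facets \<tau> \<notin> span (S - {\<sigma>})"
  shows "basis E Z (insert \<tau> (S - {\<sigma>}))"
proof -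
  let ?S' = "insert \<tau> (S - {\<sigma>})"
  have SE: "S \<subseteq> E" and iS: "indep S" and ZS: "Z \<subseteq> span S" using S unfolding basis_def by auto
  have fS: "finite S" using SE E by (rule finite_subset)
  have fS': "finite ?S'" using fS by simp
  have S'E: "?S' \<subseteq> E" using SE \<tau> by auto
  have iS': "indep ?S'" unfolding indep_def
  proof (intro allI impI)
    fix C assume C: "C \<subseteq> ?S'" "boundary C = {}"
    have fC: "finite C" using C(1) fS' by (rule finite_subset)
    show "C = {}"
    proof (cases "\<tau> \<in> C")
      case True
      have "C = insert \<tau> (C - {\<tau>})" using True by auto
      then have "boundary C = symd (facets \<tau>) (boundary (C - {\<tau>}))"
        using boundary_insert[of "C - {\<tau>}" \<tau>] fC by simp
      then have "facets \<tau> = boundary (C - {\<tau>})" using C(2) symd_eq_empty by metis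
      moreover have "C - {\<tau>} \<subseteq> S - {\<sigma>}" using C(1) by auto
      ultimately have "facets \<tau> \<in> span (S - {\<sigma>})" by (intro spanI)
      then show ?thesis using ns by simp
    next
      case False
      then have "C \<subseteq> S" using C(1) by auto
      then show ?thesis using iS C(2) unfolding indep_def by blast
    qed
  qed
  have "facets \<tau> \<in> span S" using Z\<tau> ZS by blast
  then obtain B where B: "B \<subseteq> S" "facets \<tau> = boundary B" by (rule spanE)
  have fB: "finite B" using B(1) fS by (rule finite_subset)
  have \<sigma>B: "\<sigma> \<in> B"
  proof (rule ccontr)
    assume "\<sigma> \<notin> B"
    then have "B \<subseteq> S - {\<sigma>}" using B(1) by auto
    then have "facets \<tau> \<in> span (S - {\<sigma>})" using B(2) by (rule spanI)
    then show False using ns by simp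
  qed
  have "B = insert \<sigma> (B - {\<sigma>})" using \<sigma>B by auto
  then have bB: "boundary B = symd (facets \<sigma>) (boundary (B - {\<sigma>}))"
    using boundary_insert[of "B - {\<sigma>}" \<sigma>] fB by simp
  have "\<tau> \<notin> B - {\<sigma>}" using B(1) \<tau>(2) by auto
  then have "boundary (insert \<tau> (B - {\<sigma>})) = symd (facets \<tau>) (boundary (B - {\<sigma>}))"
    using boundary_insert[of "B - {\<sigma>}" \<tau>] fB by simp
  also have "\<dots> = facets \<sigma>" unfolding B(2) bB by auto
  finally have "facets \<sigma> \<in> span ?S'" using B(1) by (intro spanI[of "insert \<tau> (B - {\<sigma>})"]) auto
  then have "span (insert \<sigma> ?S') \<subseteq> span ?S'" by (rule span_insert[OF fS'])
  moreover have "span S \<subseteq> span (insert \<sigma> ?S')" by (rule span_mono) auto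
  ultimately have "Z \<subseteq> span ?S'" using ZS by blast
  then show ?thesis unfolding basis_def using S'E iS' by blast
qed

lemma basis_sub_eq:
  assumes E: "finite E" and Zf: "\<forall>\<sigma>\<in>E. facets \<sigma> \<in> Z"
    and S0: "basis E Z S0" and S': "basis E Z S'" and sub: "S' \<subseteq> S0"
  shows "S' = S0"
proof (rule ccontr)
  assume "S' \<noteq> S0"
  then obtain \<sigma> where \<sigma>: "\<sigma> \<in> S0" "\<sigma> \<notin> S'" using sub by blast
  have S0E: "S0 \<subseteq> E" "indep S0" using S0 unfolding basis_def by auto
  have fS0: "finite S0" using S0E(1) E by (rule finite_subset)
  have "facets \<sigma> \<in> Z" using Zf \<sigma>(1) S0E(1) by blast
  then have "facets \<sigma> \<in> span S'" using S' unfolding basis_def by blast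
  moreover have "span S' \<subseteq> span (S0 - {\<sigma>})" using sub \<sigma> by (intro span_mono) auto
  ultimately have "facets \<sigma> \<in> span (S0 - {\<sigma>})" by blast
  then show False using not_in_span_rm[OF S0E(2) fS0 \<sigma>(1)] by simp
qed

definition exopt :: "'x set set \<Rightarrow> 'x set set set \<Rightarrow> ('x set \<Rightarrow> 'x set \<Rightarrow> bool) \<Rightarrow> 'x set set \<Rightarrow> bool" where
  "exopt E Z R S0 \<longleftrightarrow> (\<forall>\<sigma>\<in>S0. \<forall>\<tau>\<in>E - S0. basis E Z (insert \<tau> (S0 - {\<sigma>})) \<longrightarrow> R \<sigma> \<tau>)"

lemma optimal:
  fixes w :: "'x set \<Rightarrow> real"
  assumes E: "finite E" and Zf: "\<forall>\<sigma>\<in>E. facets \<sigma> \<in> Z"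
    and S0: "basis E Z S0" and ex: "exopt E Z R S0"
    and w: "\<forall>s\<in>E. \<forall>t\<in>E. R s t \<longrightarrow> w s < w t"
  shows "basis E Z S' \<Longrightarrow> S' \<noteq> S0 \<Longrightarrow> sum w S0 < sum w S'"
proof (induction "card (S' - S0)" arbitrary: S' rule: less_induct)
  case less
  have S0E: "S0 \<subseteq> E" "indep S0" "Z \<subseteq> span S0" using S0 unfolding basis_def by auto
  have S'E: "S' \<subseteq> E" "indep S'" "Z \<subseteq> span S'" using less.prems unfolding basis_def by auto
  have fS0: "finite S0" using S0E(1) E by (rule finite_subset)
  have fS': "finite S'" using S'E(1) E by (rule finite_subset)
  have "\<not> S' \<subseteq> S0" using basis_sub_eq[OF E Zf S0 less.prems(1)] less.prems(2) by blast
  then obtain \<tau> where \<tau>: "\<tau> \<in> S'" "\<tau> \<notin> S0" by blast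
  have \<tau>E: "\<tau> \<in> E" using \<tau>(1) S'E(1) by blast
  have "facets \<tau> \<in> span S0" using Zf \<tau>E S0E(3) by blast
  then obtain C where C: "C \<subseteq> S0" "facets \<tau> = boundary C" by (rule spanE)
  have fC: "finite C" using C(1) fS0 by (rule finite_subset)
  have nsp: "facets \<tau> \<notin> span (S' - {\<tau>})" by (rule not_in_span_rm[OF S'E(2) fS' \<tau>(1)])
  have "\<exists>\<sigma>\<in>C. facets \<sigma> \<notin> span (S' - {\<tau>})"
  proof (rule ccontr)
    assume "\<not> (\<exists>\<sigma>\<in>C. facets \<sigma> \<notin> span (S' - {\<tau>}))"
    then have "boundary C \<in> span (S' - {\<tau>})" using fS' fC by (intro sum_in_span) auto
    then show False using nsp C(2) by simp
  qed
  then obtain \<sigma> where \<sigma>: "\<sigma> \<in> C" "facets \<sigma> \<notin> span (S' - {\<tau>})" by blast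
  have \<sigma>S0: "\<sigma> \<in> S0" using \<sigma>(1) C(1) by blast
  have \<sigma>E: "\<sigma> \<in> E" using \<sigma>S0 S0E(1) by blast
  have \<sigma>\<tau>: "\<sigma> \<noteq> \<tau>" using \<sigma>S0 \<tau>(2) by blast
  have \<sigma>S': "\<sigma> \<notin> S'"
  proof
    assume "\<sigma> \<in> S'"
    then have h: "\<sigma> \<in> S' - {\<tau>}" using \<sigma>\<tau> by simp
    show False using span_facets[OF h] \<sigma>(2) by simp
  qed
  define S'' where "S'' = insert \<sigma> (S' - {\<tau>})"
  have bS'': "basis E Z S''" unfolding S''_def
    by (rule exchange[OF E less.prems(1) \<tau>(1) \<sigma>E \<sigma>S']) (use Zf \<sigma>E \<sigma>(2) in auto)
  have ns2: "facets \<tau> \<notin> span (S0 - {\<sigma>})"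
  proof
    assume "facets \<tau> \<in> span (S0 - {\<sigma>})"
    then obtain B where B: "B \<subseteq> S0 - {\<sigma>}" "facets \<tau> = boundary B" by (rule spanE)
    have "B = C" using indep_unique[OF S0E(2) fS0, of B C] B C by auto
    then show False using B(1) \<sigma>(1) by auto
  qed
  have "basis E Z (insert \<tau> (S0 - {\<sigma>}))"
    by (rule exchange[OF E S0 \<sigma>S0 \<tau>E \<tau>(2)]) (use Zf \<tau>E ns2 in auto)
  then have "R \<sigma> \<tau>" using ex \<sigma>S0 \<tau>E \<tau>(2) unfolding exopt_def by blast
  then have w\<sigma>\<tau>: "w \<sigma> < w \<tau>" using w \<sigma>E \<tau>E by blast
  have "sum w S'' = w \<sigma> + sum w (S' - {\<tau>})" unfolding S''_def using fS' \<sigma>S' by (simp add: sum.insert)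
  moreover have "sum w S' = w \<tau> + sum w (S' - {\<tau>})" using fS' \<tau>(1) by (rule sum.remove)
  ultimately have lt: "sum w S'' < sum w S'" using w\<sigma>\<tau> by simp
  have "S'' - S0 = (S' - S0) - {\<tau>}" unfolding S''_def using \<sigma>S0 by auto
  moreover have "card ((S' - S0) - {\<tau>}) < card (S' - S0)"
    using \<tau> fS' by (intro card_Diff1_less) auto
  ultimately have "card (S'' - S0) < card (S' - S0)" by simp
  show ?case
  proof (cases "S'' = S0")
    case True then show ?thesis using lt by simp
  next
    case False
    have "sum w S0 < sum w S''" using less.hyps[OF \<open>card (S'' - S0) < card (S' - S0)\<close> bS'' False] .
    then show ?thesis using lt by simp
  qed
qed

lemma basis_exists:
  assumes E: "finite E" and ZE: "Z \<subseteq> span E"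
  shows "\<exists>S. basis E Z S"
proof -
  let ?P = "\<lambda>S. S \<subseteq> E \<and> Z \<subseteq> span S"
  obtain S where S: "?P S" "\<forall>S'. ?P S' \<longrightarrow> card S \<le> card S'"
    using ex_has_least_nat[of ?P E card] ZE by blast
  have fS: "finite S" using S(1) E by (auto intro: finite_subset)
  have "indep S" unfolding indep_def
  proof (intro allI impI)
    fix C assume C: "C \<subseteq> S" "boundary C = {}"
    show "C = {}"
    proof (rule ccontr)
      assume "C \<noteq> {}"
      then obtain \<sigma> where \<sigma>: "\<sigma> \<in> C" by blast
      have fC: "finite C" using C(1) fS by (rule finite_subset)
      have "C = insert \<sigma> (C - {\<sigma>})" using \<sigma> by auto
      then have "boundary C = symd (facets \<sigma>) (boundary (C - {\<sigma>}))"
        using boundary_insert[of "C - {\<sigma>}" \<sigma>] fC by simp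
      then have "facets \<sigma> = boundary (C - {\<sigma>})" using C(2) symd_eq_empty by metis
      then have "facets \<sigma> \<in> span (S - {\<sigma>})" using C(1) by (intro spanI[of "C - {\<sigma>}"]) auto
      then have "span (insert \<sigma> (S - {\<sigma>})) \<subseteq> span (S - {\<sigma>})" using fS by (intro span_insert) auto
      moreover have "insert \<sigma> (S - {\<sigma>}) = S" using \<sigma> C(1) by auto
      ultimately have "?P (S - {\<sigma>})" using S(1) by auto
      then have "card S \<le> card (S - {\<sigma>})" using S(2) by blast
      moreover have "card (S - {\<sigma>}) < card S" using fS \<sigma> C(1) by (intro card_Diff1_less) auto
      ultimately show False by simp
    qed
  qed
  then show ?thesis using S(1) unfolding basis_def by blast
qed

lemma rank_mono:
  assumes E: "finite E" and R: "sto R E" and s: "s \<in> E" and t: "t \<in> E" and st: "R s t"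
  shows "card {u\<in>E. R u s} < card {u\<in>E. R u t}"
proof (rule psubset_card_mono)
  show "finite {u\<in>E. R u t}" using E by simp
  have "{u\<in>E. R u s} \<subseteq> {u\<in>E. R u t}" using sto_trans[OF R _ s t _ st] by blast
  moreover have "s \<in> {u\<in>E. R u t}" "s \<notin> {u\<in>E. R u s}" using s st sto_irr[OF R s] by auto
  ultimately show "{u\<in>E. R u s} \<subset> {u\<in>E. R u t}" by blast
qed

lemma exopt_exists:
  assumes E: "finite E" and ZE: "Z \<subseteq> span E" and R: "sto R E"
  shows "\<exists>S0. basis E Z S0 \<and> exopt E Z R S0"
proof -
  define n where "n \<sigma> = card {u\<in>E. R u \<sigma>}" for \<sigma>
  obtain S1 where "basis E Z S1" using basis_exists[OF E ZE] by blast
  then obtain S0 where S0: "basis E Z S0" "\<forall>S'. basis E Z S' \<longrightarrow> sum n S0 \<le> sum n S'"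
    using ex_has_least_nat[of "basis E Z" S1 "sum n"] by blast
  have fS0: "finite S0" using S0(1) E unfolding basis_def by (auto intro: finite_subset)
  have "exopt E Z R S0" unfolding exopt_def
  proof (intro ballI impI)
    fix \<sigma> \<tau> assume \<sigma>: "\<sigma> \<in> S0" and \<tau>: "\<tau> \<in> E - S0" and b: "basis E Z (insert \<tau> (S0 - {\<sigma>}))"
    have "sum n S0 \<le> sum n (insert \<tau> (S0 - {\<sigma>}))" using S0(2) b by blast
    moreover have "sum n (insert \<tau> (S0 - {\<sigma>})) = n \<tau> + sum n (S0 - {\<sigma>})" using fS0 \<tau> by simp
    moreover have "sum n S0 = n \<sigma> + sum n (S0 - {\<sigma>})" using fS0 \<sigma> by (rule sum.remove)
    ultimately have le: "n \<sigma> \<le> n \<tau>" by simp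
    have \<sigma>E: "\<sigma> \<in> E" using \<sigma> S0(1) unfolding basis_def by blast
    show "R \<sigma> \<tau>"
    proof (rule ccontr)
      assume "\<not> R \<sigma> \<tau>"
      moreover have "\<sigma> \<noteq> \<tau>" using \<sigma> \<tau> by blast
      ultimately have "R \<tau> \<sigma>" using sto_total[OF R \<sigma>E, of \<tau>] \<tau> by blast
      then have "n \<tau> < n \<sigma>" unfolding n_def using rank_mono[OF E R, of \<tau> \<sigma>] \<tau> \<sigma>E by blast
      then show False using le by simp
    qed
  qed
  then show ?thesis using S0(1) by blast
qed

lemma sd_skel:
  assumes "S \<subseteq> simplices_of_dim K k" "1 \<le> k"
  shows "simplices_of_dim (skeleton K (k - 1) \<union> S) k = S"
    "simplices_of_dim (skeleton K (k - 1) \<union> S) (Suc k) = {}"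
    "simplices_of_dim (skeleton K (k - 1) \<union> S) (k - 1) = simplices_of_dim K (k - 1)"
  using assms unfolding simplices_of_dim_def skeleton_def by auto

lemma sa_iff:
  fixes X :: "'a::euclidean_space set"
  assumes X: "finite X" and k: "1 \<le> k"
  shows "spanning_acycle X k S \<longleftrightarrow>
    basis (simplices_of_dim (DEL X) k)
      {C. finite C \<and> C \<subseteq> simplices_of_dim (DEL X) (k - 1) \<and> boundary C = {}} S"
proof -
  let ?E = "simplices_of_dim (DEL X) k"
  let ?Z = "{C. finite C \<and> C \<subseteq> simplices_of_dim (DEL X) (k - 1) \<and> boundary C = {}}"
  let ?L = "skeleton (DEL X) (k - 1) \<union> S"
  have key: "(reduced_betti_zero ?L k \<longleftrightarrow> indep S) \<and> (reduced_betti_zero ?L (k - 1) \<longleftrightarrow> ?Z \<subseteq> span S)"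
    if SE: "S \<subseteq> ?E"
  proof
    have fS: "finite S" using SE sd_finite[OF X, of k] by (rule finite_subset)
    note sk = sd_skel[OF SE k]
    have "reduced_betti_zero ?L k \<longleftrightarrow>
      (\<forall>C. finite C \<and> C \<subseteq> S \<and> boundary C = {} \<longrightarrow> (\<exists>D. finite D \<and> D \<subseteq> {} \<and> boundary D = C))"
      unfolding rbz_iff sk(1) sk(2) ..
    also have "\<dots> \<longleftrightarrow> indep S" unfolding indep_def
    proof
      assume h: "\<forall>C. finite C \<and> C \<subseteq> S \<and> boundary C = {} \<longrightarrow> (\<exists>D. finite D \<and> D \<subseteq> {} \<and> boundary D = C)"
      show "\<forall>C. C \<subseteq> S \<longrightarrow> boundary C = {} \<longrightarrow> C = {}"
      proof (intro allI impI)
        fix C assume C: "C \<subseteq> S" "boundary C = {}"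
        have "finite C" using C(1) fS by (rule finite_subset)
        then obtain D where "D \<subseteq> {}" "boundary D = C" using h C by blast
        then show "C = {}" by simp
      qed
    next
      assume h: "\<forall>C. C \<subseteq> S \<longrightarrow> boundary C = {} \<longrightarrow> C = {}"
      show "\<forall>C. finite C \<and> C \<subseteq> S \<and> boundary C = {} \<longrightarrow> (\<exists>D. finite D \<and> D \<subseteq> {} \<and> boundary D = C)"
      proof (intro allI impI)
        fix C assume "finite C \<and> C \<subseteq> S \<and> boundary C = {}"
        then have "C = {}" using h by blast
        then show "\<exists>D. finite D \<and> D \<subseteq> {} \<and> boundary D = C" by (intro exI[of _ "{}"]) simp
      qed
    qed
    finally show "reduced_betti_zero ?L k \<longleftrightarrow> indep S" .
    have sk1: "simplices_of_dim ?L (Suc (k - 1)) = S" using sk(1) k by simp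
    have "reduced_betti_zero ?L (k - 1) \<longleftrightarrow>
      (\<forall>C. finite C \<and> C \<subseteq> simplices_of_dim (DEL X) (k - 1) \<and> boundary C = {} \<longrightarrow>
         (\<exists>D. finite D \<and> D \<subseteq> S \<and> boundary D = C))"
      unfolding rbz_iff sk(3) sk1 ..
    also have "\<dots> \<longleftrightarrow> ?Z \<subseteq> span S"
    proof
      assume h: "\<forall>C. finite C \<and> C \<subseteq> simplices_of_dim (DEL X) (k - 1) \<and> boundary C = {} \<longrightarrow>
         (\<exists>D. finite D \<and> D \<subseteq> S \<and> boundary D = C)"
      show "?Z \<subseteq> span S"
      proof
        fix C assume "C \<in> ?Z"
        then obtain D where "D \<subseteq> S" "boundary D = C" using h by blast
        then show "C \<in> span S" by (intro spanI[of D]) auto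
      qed
    next
      assume h: "?Z \<subseteq> span S"
      show "\<forall>C. finite C \<and> C \<subseteq> simplices_of_dim (DEL X) (k - 1) \<and> boundary C = {} \<longrightarrow>
         (\<exists>D. finite D \<and> D \<subseteq> S \<and> boundary D = C)"
      proof (intro allI impI)
        fix C assume "finite C \<and> C \<subseteq> simplices_of_dim (DEL X) (k - 1) \<and> boundary C = {}"
        then have "C \<in> span S" using h by blast
        then obtain D where D: "D \<subseteq> S" "C = boundary D" by (rule spanE)
        have "finite D" using D(1) fS by (rule finite_subset)
        then show "\<exists>D. finite D \<and> D \<subseteq> S \<and> boundary D = C" using D by blast
      qed
    qed
    finally show "reduced_betti_zero ?L (k - 1) \<longleftrightarrow> ?Z \<subseteq> span S" .
  qed
  show ?thesis
  proof
    assume sa: "spanning_acycle X k S"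
    then have SE: "S \<subseteq> ?E" unfolding spanning_acycle_def by blast
    have "reduced_betti_zero ?L k" "reduced_betti_zero ?L (k - 1)"
      using sa unfolding spanning_acycle_def Let_def by blast+
    then show "basis ?E ?Z S" unfolding basis_def using key[OF SE] SE by blast
  next
    assume b: "basis ?E ?Z S"
    then have SE: "S \<subseteq> ?E" unfolding basis_def by blast
    have "indep S" "?Z \<subseteq> span S" using b unfolding basis_def by blast+
    then have "reduced_betti_zero ?L k" "reduced_betti_zero ?L (k - 1)" using key[OF SE] by blast+
    then show "spanning_acycle X k S" unfolding spanning_acycle_def Let_def using SE by blast
  qed
qed

theorem lemma2:
  fixes X :: "'a::euclidean_space set" and \<iota> :: "'a \<Rightarrow> nat" and k :: nat
  assumes "finite X" and "general_position X" and "inj_on \<iota> X"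
    and "1 \<le> k" and "k < DIM('a)"
  shows "MSA \<iota> X k \<subseteq> USC \<iota> X k"
proof -
  note X = assms(1) and inj = assms(3) and k = assms(4)
  define E where "E = simplices_of_dim (DEL X) k"
  define Z where "Z = {C. finite C \<and> C \<subseteq> simplices_of_dim (DEL X) (k - 1) \<and> boundary C = {}}"
  define R where "R = prec \<iota> k"
  have kk: "Suc (k - 1) = k" using k by simp
  have finE: "finite E" unfolding E_def by (rule sd_finite[OF X])
  have Zf: "\<forall>\<sigma>\<in>E. facets \<sigma> \<in> Z"
  proof
    fix \<sigma> assume "\<sigma> \<in> E"
    then have s: "\<sigma> \<in> simplices_of_dim (DEL X) (Suc (k - 1))" unfolding E_def kk .
    have "facets \<sigma> \<subseteq> simplices_of_dim (DEL X) (k - 1)" by (rule facets_sd[OF X s])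
    moreover have "finite \<sigma>" using s DEL_elem_finite[OF X] unfolding simplices_of_dim_def by blast
    ultimately show "facets \<sigma> \<in> Z" unfolding Z_def by simp
  qed
  have ZE: "Z \<subseteq> span E"
  proof
    fix C assume "C \<in> Z"
    then have "finite C \<and> C \<subseteq> simplices_of_dim (DEL X) (k - 1) \<and> boundary C = {}" unfolding Z_def by blast
    then obtain D where D: "D \<subseteq> simplices_of_dim (DEL X) (Suc (k - 1))" "boundary D = C"
      using DEL_rbz[OF X, of "k - 1"] unfolding rbz_iff by blast
    then show "C \<in> span E" unfolding E_def kk by (intro spanI[of D]) auto
  qed
  have stoR: "sto R E" unfolding R_def E_def by (rule prec_sto[OF X inj k])
  obtain S0 where S0: "basis E Z S0" "exopt E Z R S0" using exopt_exists[OF finE ZE stoR] by blast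
  have S0E: "S0 \<subseteq> E" "indep S0" using S0(1) unfolding basis_def by blast+
  have fS0: "finite S0" using S0E(1) finE by (rule finite_subset)
  have saiff: "spanning_acycle X k S \<longleftrightarrow> basis E Z S" for S
    unfolding E_def Z_def by (rule sa_iff[OF X k])
  define n where "n \<sigma> = real (card {u\<in>E. R u \<sigma>})" for \<sigma>
  have nmono: "\<forall>s\<in>E. \<forall>t\<in>E. R s t \<longrightarrow> n s < n t"
    unfolding n_def using rank_mono[OF finE stoR] by simp
  have isM: "is_MSA \<iota> X k S0"
    unfolding is_MSA_def
  proof (intro conjI allI impI)
    show "spanning_acycle X k S0" using saiff S0(1) by blast
  next
    fix w :: "'a set \<Rightarrow> real" and S'
    assume w: "\<forall>s\<in>simplices_of_dim (DEL X) k. \<forall>t\<in>simplices_of_dim (DEL X) k. prec \<iota> k s t \<longrightarrow> w s < w t"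
      and S': "spanning_acycle X k S'"
    have w': "\<forall>s\<in>E. \<forall>t\<in>E. R s t \<longrightarrow> w s < w t" using w unfolding E_def R_def .
    have bS': "basis E Z S'" using saiff S' by blast
    show "sum w S0 \<le> sum w S'"
    proof (cases "S' = S0")
      case True then show ?thesis by simp
    next
      case False
      then show ?thesis using optimal[OF finE Zf S0(1) S0(2) w' bS'] by simp
    qed
  qed
  have uniq: "S = S0" if "is_MSA \<iota> X k S" for S
  proof (rule ccontr)
    assume ne: "S \<noteq> S0"
    have sa: "spanning_acycle X k S" using that unfolding is_MSA_def by blast
    then have bS: "basis E Z S" using saiff by blast
    have "sum n S0 < sum n S" using optimal[OF finE Zf S0(1) S0(2) nmono bS ne] .
    moreover have "sum n S \<le> sum n S0"
    proof -
      have "\<forall>s\<in>simplices_of_dim (DEL X) k. \<forall>t\<in>simplices_of_dim (DEL X) k. prec \<iota> k s t \<longrightarrow> n s < n t"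
        using nmono unfolding E_def R_def .
      moreover have "spanning_acycle X k S0" using saiff S0(1) by blast
      ultimately show ?thesis using that unfolding is_MSA_def by blast
    qed
    ultimately show False by simp
  qed
  have MSA: "MSA \<iota> X k = S0" unfolding MSA_def using isM uniq by (rule the_equality)
  show ?thesis
  proof
    fix \<sigma> assume "\<sigma> \<in> MSA \<iota> X k"
    then have \<sigma>S0: "\<sigma> \<in> S0" unfolding MSA .
    have \<sigma>E: "\<sigma> \<in> E" using \<sigma>S0 S0E(1) by blast
    have "\<forall>\<tau>\<in>simplices_of_dim (DEL X) (Suc k). \<sigma> \<subset> \<tau> \<longrightarrow> R \<sigma> (maxf R \<tau>)"
    proof (intro ballI impI)
      fix \<tau> assume \<tau>: "\<tau> \<in> simplices_of_dim (DEL X) (Suc k)" and st: "\<sigma> \<subset> \<tau>"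
      define F where "F = facets \<tau>"
      have FE: "F \<subseteq> E" unfolding F_def E_def by (rule facets_sd[OF X \<tau>])
      have \<tau>fin: "finite \<tau>" "\<tau> \<noteq> {}" "card \<tau> = Suc (Suc k)"
        using \<tau> DEL_elem_finite[OF X] unfolding simplices_of_dim_def by auto
      have Ffin: "finite F" "F \<noteq> {}" unfolding F_def using \<tau>fin facets_ne by auto
      have stoF: "sto R F" using stoR FE by (rule sto_subset)
      define m where "m = maxf R \<tau>"
      have mF: "m \<in> F" and mmax: "\<forall>g\<in>F. g \<noteq> m \<longrightarrow> R g m"
        using maxf_props[of \<tau> R] Ffin stoF unfolding F_def m_def by auto
      have \<sigma>F: "\<sigma> \<in> F"
      proof -
        obtain v where v: "v \<in> \<tau>" "v \<notin> \<sigma>" using st by blast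
        have sub: "\<sigma> \<subseteq> \<tau> - {v}" using st v(2) by blast
        have "card \<sigma> = Suc k" using \<sigma>E unfolding E_def simplices_of_dim_def by simp
        moreover have "card (\<tau> - {v}) = Suc k" using \<tau>fin v(1) by simp
        ultimately have "\<sigma> = \<tau> - {v}" using card_subset_eq[OF _ sub] \<tau>fin(1) by simp
        then show ?thesis unfolding F_def facets_iff using v(1) by blast
      qed
      show "R \<sigma> (maxf R \<tau>)"
      proof (cases "\<sigma> = m")
        case False
        then show ?thesis using mmax \<sigma>F unfolding m_def by blast
      next
        case True
        have mS0: "m \<in> S0" using \<sigma>S0 True by simp
        have mE: "m \<in> E" using mF FE by blast
        have bF: "boundary F = {}" unfolding F_def using \<tau>fin(1) by simp
        have "F = insert m (F - {m})" using mF by auto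
        then have "boundary F = symd (facets m) (boundary (F - {m}))"
          using boundary_insert[of "F - {m}" m] Ffin(1) by simp
        then have fm: "facets m = boundary (F - {m})" using bF symd_eq_empty by metis
        have nsp: "facets m \<notin> span (S0 - {m})" by (rule not_in_span_rm[OF S0E(2) fS0 mS0])
        have "\<exists>g\<in>F - {m}. facets g \<notin> span (S0 - {m})"
        proof (rule ccontr)
          assume "\<not> (\<exists>g\<in>F - {m}. facets g \<notin> span (S0 - {m}))"
          then have "\<forall>g\<in>F - {m}. facets g \<in> span (S0 - {m})" by blast
          then have "boundary (F - {m}) \<in> span (S0 - {m})"
            using sum_in_span[of "S0 - {m}" "F - {m}"] fS0 Ffin(1) by simp
          then show False using nsp fm by simp
        qed
        then obtain g where g: "g \<in> F" "g \<noteq> m" "facets g \<notin> span (S0 - {m})" by blast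
        have gS0: "g \<notin> S0"
        proof
          assume "g \<in> S0"
          then have h: "g \<in> S0 - {m}" using g(2) by simp
          show False using span_facets[OF h] g(3) by simp
        qed
        have gE: "g \<in> E" using g(1) FE by blast
        have "facets g \<in> Z" using Zf gE by blast
        then have "basis E Z (insert g (S0 - {m}))"
          using exchange[OF finE S0(1) mS0 gE gS0] g(3) by blast
        then have Rmg: "R m g" using S0(2) mS0 gE gS0 unfolding exopt_def by blast
        have Rgm: "R g m" using mmax g(1,2) by blast
        show ?thesis using sto_asym[OF stoR mE gE Rmg] Rgm by simp
      qed
    qed
    then show "\<sigma> \<in> USC \<iota> X k" unfolding USC_def using \<sigma>E unfolding E_def R_def by blast
  qed
qed

end
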